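(* Let $X$ be a diffeological space. Consider the functor $\mathcal{DS}/X\to\mathcal{DVS}$ sending a morphism $f:U\to V$ from a plot $p:U\to X$ to a plot $q:V\to X$ (so $q\circ f=p$) to the morphism given by the commutative square with $Tf:TU\to TV$ on top, $f:U\to V$ on the bottom and the tangent bundle projections $\pi_U,\pi_V$ as vertical maps. The colimit of this functor (in $\mathcal{DVS}$) is $\pi_X:T^{dvs}(X)\to X$, and the colimit of the composite functor $\mathcal{DS}/X\to\mathcal{DVS}\to\mathcal{VSD}$ (in $\mathcal{VSD}$) is $\pi_X:T^H(X)\to X$.
   Context: A diffeological space is a set with, for every open subset $U$ of every $\mathbb{R}^n$, a set of maps $U\to X$ called plots, containing constants, closed under precomposition with smooth maps, and satisfying the sheaf condition; smooth maps send plots to plots. $\mathcal{DS}/X$ is the category whose objects are all plots $p:U\to X$ ($U$ open in some $\mathbb{R}^n$) and whose morphisms $p\to q$ are smooth maps $f:U\to V$ with $q\circ f=p$; $TU$ is the usual tangent bundle of the open set $U$. A vector space with diffeology over $X$ is a smooth map $V\to X$ of diffeological spaces with a vector space structure on each fibre; $\mathcal{VSD}$ is the category of these (over all diffeological spaces), with morphisms the commutative squares of smooth maps $(g:V\to W, f:X\to Y)$ with $g$ linear on each fibre. A diffeological vector space over $X$ is such an object for which fibrewise addition $V\times_XV\to V$, scalar multiplication $\mathbb{R}\times V\to V$ and the zero section are smooth; $\mathcal{DVS}$ is the full subcategory of $\mathcal{VSD}$ on these. The internal tangent space $T_x(X)$ is the colimit in real vector spaces, over plots $p:U\to X$ with $U$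 a connected open neighbourhood of $0$ and $p(0)=x$ (morphisms: smooth $f$ with $f(0)=0$, $q\circ f=p$), of $p\mapsto T_0(U)$, $f\mapsto f_*$; $TX=\coprod_xT_x(X)$ with projection $\pi_X$. For a plot $f:U\to X$ with $U$ connected, $Tf:TU\to TX$ sends $T_u(U)$ into $T_{f(u)}(X)$ via $T_u(U)\cong T_0(U-u)\to T_{f(u)}(X)$ induced by $w\mapsto f(w+u)$. Hector's diffeology on $TX$ is generated by all such $Tf$ ($T^H(X)$); the dvs diffeology ($T^{dvs}(X)$) is the smallest diffeology containing Hector's making $\pi_X$ a diffeological vector space over $X$. *)

theory Defs
  imports "HOL-Analysis.Analysis"
begin

text \<open>R^n is modelled as the set of real sequences vanishing from index n on.
  The topology used is the subspace topology of the product topology on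
  nat => real, which on R n is the usual Euclidean topology.\<close>

type_synonym pt = "nat \<Rightarrow> real"

definition Rn :: "nat \<Rightarrow> pt set" where
  "Rn n = {x. \<forall>i\<ge>n. x i = 0}"

definition open_Rn :: "nat \<Rightarrow> pt set \<Rightarrow> bool" where
  "open_Rn n U \<longleftrightarrow> openin (top_of_set (Rn n)) U"

definition zv :: pt where "zv = (\<lambda>_. 0)"

definition pquot :: "nat \<Rightarrow> (pt \<Rightarrow> real) \<Rightarrow> pt \<Rightarrow> real \<Rightarrow> real" where
  "pquot i g x t = (g (x(i := x i + t)) - g x) / t"

definition pd :: "nat \<Rightarrow> (pt \<Rightarrow> real) \<Rightarrow> pt \<Rightarrow> real" where
  "pd i g x = Lim (at (0::real)) (pquot i g x)"

fun Ck :: "nat \<Rightarrow> nat \<Rightarrow> pt set \<Rightarrow> (pt \<Rightarrow> real) \<Rightarrow> bool" where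
  "Ck n 0 U g = continuous_on U g"
| "Ck n (Suc k) U g = (continuous_on U g \<and>
      (\<forall>i<n. (\<forall>x\<in>U. (pquot i g x \<longlongrightarrow> pd i g x) (at 0)) \<and> Ck n k U (pd i g)))"

definition smooth_real :: "nat \<Rightarrow> pt set \<Rightarrow> (pt \<Rightarrow> real) \<Rightarrow> bool" where
  "smooth_real n U g \<longleftrightarrow> (\<forall>k. Ck n k U g)"

definition smooth_map :: "nat \<Rightarrow> pt set \<Rightarrow> nat \<Rightarrow> pt set \<Rightarrow> (pt \<Rightarrow> pt) \<Rightarrow> bool" where
  "smooth_map n U m V f \<longleftrightarrow> f ` U \<subseteq> V \<and> f ` U \<subseteq> Rn m \<and>
     (\<forall>j<m. smooth_real n U (\<lambda>x. f x j))"

definition Dm :: "nat \<Rightarrow> nat \<Rightarrow> (pt \<Rightarrow> pt) \<Rightarrow> pt \<Rightarrow> pt \<Rightarrow> pt" where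
  "Dm n m f u v = (\<lambda>j. if j < m then (\<Sum>i<n. pd i (\<lambda>y. f y j) u * v i) else 0)"

definition Tmap :: "nat \<Rightarrow> nat \<Rightarrow> (pt \<Rightarrow> pt) \<Rightarrow> pt \<times> pt \<Rightarrow> pt \<times> pt" where
  "Tmap n m f z = (f (fst z), Dm n m f (fst z) (snd z))"

type_synonym 'a dfg = "nat \<Rightarrow> pt set \<Rightarrow> (pt \<Rightarrow> 'a) \<Rightarrow> bool"
type_synonym 'a plot = "nat \<times> pt set \<times> (pt \<Rightarrow> 'a)"

text \<open>D n U p: p is a plot with domain U, an open subset of R^n.\<close>

definition diffeology :: "'a set \<Rightarrow> 'a dfg \<Rightarrow> bool" where
  "diffeology X D \<longleftrightarrow>
     (\<forall>n U p. D n U p \<longrightarrow> open_Rn n U \<and> p ` U \<subseteq> X) \<and>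
     (\<forall>n U x. open_Rn n U \<and> x \<in> X \<longrightarrow> D n U (\<lambda>_. x)) \<and>
     (\<forall>n U p m W f. D n U p \<and> open_Rn m W \<and> smooth_map m W n U f \<longrightarrow> D m W (p \<circ> f)) \<and>
     (\<forall>n U p. open_Rn n U \<and> p ` U \<subseteq> X \<and>
        (\<forall>u\<in>U. \<exists>W. open_Rn n W \<and> u \<in> W \<and> W \<subseteq> U \<and> D n W p) \<longrightarrow> D n U p) \<and>
     (\<forall>n U p q. D n U p \<and> (\<forall>u\<in>U. p u = q u) \<longrightarrow> D n U q)"

definition dsmooth :: "'a set \<Rightarrow> 'a dfg \<Rightarrow> 'b set \<Rightarrow> 'b dfg \<Rightarrow> ('a \<Rightarrow> 'b) \<Rightarrow> bool" where
  "dsmooth X DX Y DY f \<longleftrightarrow> f ` X \<subseteq> Y \<and> (\<forall>n U p. DX n U p \<longrightarrow> DY n U (f \<circ> p))"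

definition std_dfg :: "nat \<Rightarrow> pt set \<Rightarrow> pt dfg" where
  "std_dfg n U = (\<lambda>k W g. open_Rn k W \<and> smooth_map k W n U g)"

section \<open>Vector spaces with diffeology over a base (objects of VSD)\<close>

record ('v, 'b) vsd =
  vs_tot :: "'v set"
  vs_totD :: "'v dfg"
  vs_bas :: "'b set"
  vs_basD :: "'b dfg"
  vs_prj :: "'v \<Rightarrow> 'b"
  vs_add :: "'v \<Rightarrow> 'v \<Rightarrow> 'v"
  vs_smul :: "real \<Rightarrow> 'v \<Rightarrow> 'v"
  vs_zero :: "'b \<Rightarrow> 'v"

definition fib :: "('v, 'b, 'c) vsd_scheme \<Rightarrow> 'b \<Rightarrow> 'v set" where
  "fib E x = {v \<in> vs_tot E. vs_prj E v = x}"

definition fibre_vs :: "('v, 'b, 'c) vsd_scheme \<Rightarrow> bool" where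
  "fibre_vs E \<longleftrightarrow> (\<forall>x\<in>vs_bas E.
     vs_zero E x \<in> fib E x \<and>
     (\<forall>v\<in>fib E x. \<forall>w\<in>fib E x. vs_add E v w \<in> fib E x) \<and>
     (\<forall>a. \<forall>v\<in>fib E x. vs_smul E a v \<in> fib E x) \<and>
     (\<forall>u\<in>fib E x. \<forall>v\<in>fib E x. \<forall>w\<in>fib E x.
         vs_add E (vs_add E u v) w = vs_add E u (vs_add E v w)) \<and>
     (\<forall>v\<in>fib E x. \<forall>w\<in>fib E x. vs_add E v w = vs_add E w v) \<and>
     (\<forall>v\<in>fib E x. vs_add E v (vs_zero E x) = v) \<and>
     (\<forall>v\<in>fib E x. \<exists>w\<in>fib E x. vs_add E v w = vs_zero E x) \<and>
     (\<forall>v\<in>fib E x. vs_smul E 1 v = v) \<and>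
     (\<forall>a b. \<forall>v\<in>fib E x. vs_smul E a (vs_smul E b v) = vs_smul E (a * b) v) \<and>
     (\<forall>a b. \<forall>v\<in>fib E x. vs_smul E (a + b) v = vs_add E (vs_smul E a v) (vs_smul E b v)) \<and>
     (\<forall>a. \<forall>v\<in>fib E x. \<forall>w\<in>fib E x.
         vs_smul E a (vs_add E v w) = vs_add E (vs_smul E a v) (vs_smul E a w)))"

definition is_vsd :: "('v, 'b, 'c) vsd_scheme \<Rightarrow> bool" where
  "is_vsd E \<longleftrightarrow> diffeology (vs_tot E) (vs_totD E) \<and> diffeology (vs_bas E) (vs_basD E) \<and>
     dsmooth (vs_tot E) (vs_totD E) (vs_bas E) (vs_basD E) (vs_prj E) \<and> fibre_vs E"

text \<open>Diffeological vector space over the base: fibrewise addition (on the fibred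
  product V x_X V with its subset-of-product diffeology), scalar multiplication
  (on R x V with the product diffeology) and the zero section are smooth.\<close>

definition is_dvs :: "('v, 'b, 'c) vsd_scheme \<Rightarrow> bool" where
  "is_dvs E \<longleftrightarrow> is_vsd E \<and>
     (\<forall>n U a b. vs_totD E n U a \<and> vs_totD E n U b \<and>
        (\<forall>u\<in>U. vs_prj E (a u) = vs_prj E (b u)) \<longrightarrow>
        vs_totD E n U (\<lambda>u. vs_add E (a u) (b u))) \<and>
     (\<forall>n U r a. open_Rn n U \<and> smooth_real n U r \<and> vs_totD E n U a \<longrightarrow>
        vs_totD E n U (\<lambda>u. vs_smul E (r u) (a u))) \<and>
     (\<forall>n U q. vs_basD E n U q \<longrightarrow> vs_totD E n U (\<lambda>u. vs_zero E (q u)))"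

definition vsd_hom :: "('v, 'b, 'c) vsd_scheme \<Rightarrow> ('w, 'y, 'd) vsd_scheme \<Rightarrow>
    ('v \<Rightarrow> 'w) \<Rightarrow> ('b \<Rightarrow> 'y) \<Rightarrow> bool" where
  "vsd_hom E F g h \<longleftrightarrow>
     dsmooth (vs_tot E) (vs_totD E) (vs_tot F) (vs_totD F) g \<and>
     dsmooth (vs_bas E) (vs_basD E) (vs_bas F) (vs_basD F) h \<and>
     (\<forall>v\<in>vs_tot E. vs_prj F (g v) = h (vs_prj E v)) \<and>
     (\<forall>x\<in>vs_bas E. \<forall>v\<in>fib E x. \<forall>w\<in>fib E x. g (vs_add E v w) = vs_add F (g v) (g w)) \<and>
     (\<forall>x\<in>vs_bas E. \<forall>a. \<forall>v\<in>fib E x. g (vs_smul E a v) = vs_smul F a (g v))"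

definition TUobj :: "'a plot \<Rightarrow> (pt \<times> pt, pt) vsd" where
  "TUobj j = (case j of (n, U, p) \<Rightarrow>
     \<lparr> vs_tot = {z. fst z \<in> U \<and> snd z \<in> Rn n},
       vs_totD = (\<lambda>k W g. open_Rn k W \<and> smooth_map k W n U (fst \<circ> g)
                              \<and> smooth_map k W n (Rn n) (snd \<circ> g)),
       vs_bas = U,
       vs_basD = std_dfg n U,
       vs_prj = fst,
       vs_add = (\<lambda>a b. (fst a, \<lambda>i. snd a i + snd b i)),
       vs_smul = (\<lambda>r a. (fst a, \<lambda>i. r * snd a i)),
       vs_zero = (\<lambda>u. (u, zv)) \<rparr>)"

definition plots :: "'a dfg \<Rightarrow> 'a plot set" where
  "plots DX = {(n, U, p). DX n U p}"

definition dsx_mor :: "'a plot \<Rightarrow> 'a plot \<Rightarrow> (pt \<Rightarrow> pt) set" where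
  "dsx_mor j j' = (case j of (n, U, p) \<Rightarrow> case j' of (m, V, q) \<Rightarrow>
     {f. smooth_map n U m V f \<and> (\<forall>u\<in>U. q (f u) = p u)})"

section \<open>Internal tangent spaces T_x(X) (explicit colimit in real vector spaces)\<close>

definition Jx :: "'a dfg \<Rightarrow> 'a \<Rightarrow> 'a plot set" where
  "Jx DX x = {(n, U, p). DX n U p \<and> connected U \<and> zv \<in> U \<and> p zv = x}"

definition Jmor :: "'a plot \<Rightarrow> 'a plot \<Rightarrow> (pt \<Rightarrow> pt) set" where
  "Jmor j j' = (case j of (n, U, p) \<Rightarrow> case j' of (m, V, q) \<Rightarrow>
     {f. smooth_map n U m V f \<and> f zv = zv \<and> (\<forall>u\<in>U. q (f u) = p u)})"

text \<open>Direct sum of the T_0(U_j) = R^{n_j}: finitely supported families.\<close>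

definition FS :: "'a dfg \<Rightarrow> 'a \<Rightarrow> ('a plot \<Rightarrow> pt) set" where
  "FS DX x = {s. finite {j. s j \<noteq> zv} \<and> (\<forall>j. s j \<noteq> zv \<longrightarrow> j \<in> Jx DX x \<and> s j \<in> Rn (fst j))}"

definition inj :: "'a plot \<Rightarrow> pt \<Rightarrow> 'a plot \<Rightarrow> pt" where
  "inj j v = (\<lambda>k. if k = j then v else zv)"

inductive_set Nsp :: "'a dfg \<Rightarrow> 'a \<Rightarrow> ('a plot \<Rightarrow> pt) set" for DX x where
  N0: "(\<lambda>k i. 0) \<in> Nsp DX x"
| Ngen: "j \<in> Jx DX x \<Longrightarrow> j' \<in> Jx DX x \<Longrightarrow> f \<in> Jmor j j' \<Longrightarrow> v \<in> Rn (fst j) \<Longrightarrow>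
     (\<lambda>k i. inj j' (Dm (fst j) (fst j') f zv v) k i - inj j v k i) \<in> Nsp DX x"
| Nadd: "a \<in> Nsp DX x \<Longrightarrow> b \<in> Nsp DX x \<Longrightarrow> (\<lambda>k i. a k i + b k i) \<in> Nsp DX x"
| Nsmul: "a \<in> Nsp DX x \<Longrightarrow> (\<lambda>k i. r * a k i) \<in> Nsp DX x"

definition cls :: "'a dfg \<Rightarrow> 'a \<Rightarrow> ('a plot \<Rightarrow> pt) \<Rightarrow> ('a plot \<Rightarrow> pt) set" where
  "cls DX x s = {s' \<in> FS DX x. (\<lambda>k i. s' k i - s k i) \<in> Nsp DX x}"

definition Tsp :: "'a dfg \<Rightarrow> 'a \<Rightarrow> ('a plot \<Rightarrow> pt) set set" where
  "Tsp DX x = cls DX x ` FS DX x"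

type_synonym 'a tx = "'a \<times> ('a plot \<Rightarrow> pt) set"

definition TXset :: "'a set \<Rightarrow> 'a dfg \<Rightarrow> 'a tx set" where
  "TXset X DX = (SIGMA x:X. Tsp DX x)"

definition rep :: "('a plot \<Rightarrow> pt) set \<Rightarrow> 'a plot \<Rightarrow> pt" where
  "rep c = (SOME s. s \<in> c)"

definition tx_add :: "'a dfg \<Rightarrow> 'a tx \<Rightarrow> 'a tx \<Rightarrow> 'a tx" where
  "tx_add DX a b = (fst a, cls DX (fst a) (\<lambda>k i. rep (snd a) k i + rep (snd b) k i))"

definition tx_smul :: "'a dfg \<Rightarrow> real \<Rightarrow> 'a tx \<Rightarrow> 'a tx" where
  "tx_smul DX r a = (fst a, cls DX (fst a) (\<lambda>k i. r * rep (snd a) k i))"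

definition tx_zero :: "'a dfg \<Rightarrow> 'a \<Rightarrow> 'a tx" where
  "tx_zero DX x = (x, cls DX x (\<lambda>k i. 0))"

text \<open>Tp : TU -> TX for a plot p : U -> X.  T_u(U) = T_0(C - u), where C is the
  connected component of u in U, mapped into T_{p u}(X) via w |-> p(w + u).\<close>

definition Tleg :: "'a dfg \<Rightarrow> 'a plot \<Rightarrow> pt \<times> pt \<Rightarrow> 'a tx" where
  "Tleg DX j z = (case j of (n, U, p) \<Rightarrow>
     (let u = fst z; v = snd z in
       (p u, cls DX (p u)
          (inj (n, (\<lambda>w i. w i - u i) ` connected_component_set U u, \<lambda>w. p (\<lambda>i. w i + u i)) v))))"

definition Pleg :: "'a plot \<Rightarrow> pt \<Rightarrow> 'a" where
  "Pleg j = snd (snd j)"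

definition hector_gens :: "'a dfg \<Rightarrow> 'a tx plot set" where
  "hector_gens DX = {(k, W, Tleg DX j \<circ> g) | j k W g.
      j \<in> plots DX \<and> vs_totD (TUobj j) k W g}"

definition hector :: "'a set \<Rightarrow> 'a dfg \<Rightarrow> 'a tx dfg" where
  "hector X DX k W q \<longleftrightarrow> (\<forall>D. diffeology (TXset X DX) D \<and>
      (\<forall>(k', W', q') \<in> hector_gens DX. D k' W' q') \<longrightarrow> D k W q)"

definition TX_with :: "'a set \<Rightarrow> 'a dfg \<Rightarrow> 'a tx dfg \<Rightarrow> ('a tx, 'a) vsd" where
  "TX_with X DX D = \<lparr> vs_tot = TXset X DX, vs_totD = D, vs_bas = X, vs_basD = DX,
      vs_prj = fst, vs_add = tx_add DX, vs_smul = tx_smul DX, vs_zero = tx_zero DX \<rparr>"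

definition TXH :: "'a set \<Rightarrow> 'a dfg \<Rightarrow> ('a tx, 'a) vsd" where
  "TXH X DX = TX_with X DX (hector X DX)"

definition dvs_dfg :: "'a set \<Rightarrow> 'a dfg \<Rightarrow> 'a tx dfg" where
  "dvs_dfg X DX k W q \<longleftrightarrow> (\<forall>D. (\<forall>k' W' q'. hector X DX k' W' q' \<longrightarrow> D k' W' q') \<and>
      is_dvs (TX_with X DX D) \<longrightarrow> D k W q)"

definition TXdvs :: "'a set \<Rightarrow> 'a dfg \<Rightarrow> ('a tx, 'a) vsd" where
  "TXdvs X DX = TX_with X DX (dvs_dfg X DX)"

definition cocone :: "'a dfg \<Rightarrow> ('w, 'y, 'd) vsd_scheme \<Rightarrow>
    ('a plot \<Rightarrow> pt \<times> pt \<Rightarrow> 'w) \<Rightarrow> ('a plot \<Rightarrow> pt \<Rightarrow> 'y) \<Rightarrow> bool" where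
  "cocone DX W G H \<longleftrightarrow>
     (\<forall>j\<in>plots DX. vsd_hom (TUobj j) W (G j) (H j)) \<and>
     (\<forall>j\<in>plots DX. \<forall>j'\<in>plots DX. \<forall>f\<in>dsx_mor j j'.
        (\<forall>z\<in>vs_tot (TUobj j). G j' (Tmap (fst j) (fst j') f z) = G j z) \<and>
        (\<forall>u\<in>fst (snd j). H j' (f u) = H j u))"

definition mediator :: "'a dfg \<Rightarrow> ('a tx, 'a) vsd \<Rightarrow> ('w, 'y, 'd) vsd_scheme \<Rightarrow>
    ('a plot \<Rightarrow> pt \<times> pt \<Rightarrow> 'w) \<Rightarrow> ('a plot \<Rightarrow> pt \<Rightarrow> 'y) \<Rightarrow>
    ('a tx \<Rightarrow> 'w) \<Rightarrow> ('a \<Rightarrow> 'y) \<Rightarrow> bool" where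
  "mediator DX E W G H g h \<longleftrightarrow> vsd_hom E W g h \<and>
     (\<forall>j\<in>plots DX. \<forall>z\<in>vs_tot (TUobj j). g (Tleg DX j z) = G j z) \<and>
     (\<forall>j\<in>plots DX. \<forall>u\<in>fst (snd j). h (Pleg j u) = H j u)"

definition unique_mediator :: "'a dfg \<Rightarrow> ('a tx, 'a) vsd \<Rightarrow> ('w, 'y, 'd) vsd_scheme \<Rightarrow>
    ('a plot \<Rightarrow> pt \<times> pt \<Rightarrow> 'w) \<Rightarrow> ('a plot \<Rightarrow> pt \<Rightarrow> 'y) \<Rightarrow> bool" where
  "unique_mediator DX E W G H \<longleftrightarrow>
     (\<exists>g h. mediator DX E W G H g h) \<and>
     (\<forall>g h g' h'. mediator DX E W G H g h \<and> mediator DX E W G H g' h' \<longrightarrow>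
        (\<forall>v\<in>vs_tot E. g v = g' v) \<and> (\<forall>x\<in>vs_bas E. h x = h' x))"

end

theory Submission
  imports Defs "HOL-Algebra.FiniteProduct"
begin


definition addp :: "pt \<Rightarrow> pt \<Rightarrow> pt" where "addp w u = (\<lambda>i. w i + u i)"
definition subp :: "pt \<Rightarrow> pt \<Rightarrow> pt" where "subp w u = (\<lambda>i. w i - u i)"

lemma Lim_at0_eq:
  assumes "\<And>t. t \<noteq> 0 \<Longrightarrow> f t = (c::real)"
  shows "Lim (at (0::real)) f = c" "(f \<longlongrightarrow> c) (at 0)"
proof -
  have "(f \<longlongrightarrow> c) (at 0)"
    by (rule tendsto_eventually) (simp add: eventually_at_filter assms)
  then show "(f \<longlongrightarrow> c) (at 0)" "Lim (at (0::real)) f = c"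
    by (auto intro: tendsto_Lim)
qed

lemma pquot_const: "pquot i (\<lambda>x. c) x = (\<lambda>t. 0)"
  by (auto simp: pquot_def)

lemma pd_const: "pd i (\<lambda>x. c) = (\<lambda>x. 0)"
  unfolding pd_def pquot_const by (rule ext) (rule Lim_at0_eq, simp)

lemma Ck_const: "Ck n k U (\<lambda>x. c)"
proof (induction k arbitrary: c)
  case 0 then show ?case by simp
next
  case (Suc k)
  then show ?case by (auto simp: pd_const pquot_const intro!: tendsto_intros)
qed

lemma pquot_coord: "t \<noteq> 0 \<Longrightarrow> pquot i (\<lambda>x. x j + c) x t = (if i = j then 1 else 0)"
  by (auto simp: pquot_def)

lemma pd_coord: "pd i (\<lambda>x. x j + c) = (\<lambda>x. if i = j then 1 else 0)"
  unfolding pd_def by (rule ext) (rule Lim_at0_eq, simp add: pquot_coord)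

lemma Ck_coord: "Ck n k U (\<lambda>x. x j + c)"
proof -
  have c: "continuous_on U (\<lambda>x. x j + c)"
    by (intro continuous_intros continuous_on_product_then_coordinatewise continuous_on_id)
  show ?thesis
proof (cases k)
  case 0 then show ?thesis using c by simp
next
  case (Suc k')
  have "Ck n k' U (\<lambda>x. if i = j then 1 else 0)" for i
    using Ck_const[of n k' U "if i = j then 1 else 0"] by (cases "i = j") auto
  moreover have "(pquot i (\<lambda>x. x j + c) x \<longlongrightarrow> (if i = j then 1 else 0)) (at 0)" for i x
    by (rule Lim_at0_eq(2)) (rule pquot_coord)
  ultimately show ?thesis using Suc c
    by (auto simp: pd_coord)
qed
qed

lemma smooth_coord: "smooth_real n U (\<lambda>x. x j + c)"
  by (simp add: smooth_real_def Ck_coord)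

lemma smooth_const: "smooth_real n U (\<lambda>x. c)"
  by (simp add: smooth_real_def Ck_const)

lemma Ck_mono: "Ck n k U g \<Longrightarrow> V \<subseteq> U \<Longrightarrow> Ck n k V g"
  by (induction k arbitrary: g) (auto intro: continuous_on_subset)

lemma pquot_shift: "pquot i (\<lambda>w. g (addp w u) - c) w = pquot i g (addp w u)"
proof -
  have "addp (w(i := w i + t)) u = (addp w u)(i := addp w u i + t)" for t
    by (auto simp: addp_def)
  then show ?thesis by (auto simp: pquot_def)
qed

lemma pd_shift: "pd i (\<lambda>w. g (addp w u) - c) = (\<lambda>w. pd i g (addp w u) - 0)"
  by (auto simp: pd_def pquot_shift)

lemma cont_addp: "continuous_on S (\<lambda>w. addp w u)"
  unfolding addp_def
  by (intro continuous_intros continuous_on_product_then_coordinatewise continuous_on_id)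

lemma cont_subp: "continuous_on S (\<lambda>w. subp w u)"
  unfolding subp_def
  by (intro continuous_intros continuous_on_product_then_coordinatewise continuous_on_id)

lemma Ck_shift:
  assumes "Ck n k U g" "\<And>w. w \<in> V \<Longrightarrow> addp w u \<in> U"
  shows "Ck n k V (\<lambda>w. g (addp w u) - c)"
  using assms(1)
proof (induction k arbitrary: g c)
  case 0
  have "continuous_on V (g \<circ> (\<lambda>w. addp w u))"
    by (rule continuous_on_compose[OF cont_addp]) (rule continuous_on_subset[OF 0[simplified]], use assms(2) in auto)
  then show ?case by (auto simp: o_def intro!: continuous_intros)
next
  case (Suc k)
  have "continuous_on V (g \<circ> (\<lambda>w. addp w u))"
    by (rule continuous_on_compose[OF cont_addp]) (rule continuous_on_subset, use Suc.prems assms(2) in auto)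
  moreover have "Ck n k V (\<lambda>w. pd i g (addp w u))" if "i < n" for i
    using Suc.IH[of "pd i g" 0] Suc.prems that by simp
  ultimately show ?case using Suc assms(2) by (auto simp: o_def pd_shift pquot_shift intro!: continuous_intros)
qed



lemma open_Rn_sub: "open_Rn n U \<Longrightarrow> U \<subseteq> Rn n"
  unfolding open_Rn_def by (metis openin_imp_subset)

lemma zv_Rn: "zv \<in> Rn n" by (simp add: Rn_def zv_def)

lemma Rn0: "Rn 0 = {zv}"
  by (auto simp: Rn_def zv_def)

lemma open_Rn0: "open_Rn 0 {zv}"
  unfolding open_Rn_def Rn0 by simp

lemma open_Rn_whole: "open_Rn n (Rn n)"
  unfolding open_Rn_def by simp

lemma box_path_connected:
  fixes y :: pt
  shows "path_connected {z \<in> Rn n. \<forall>i\<in>I. dist (z i) (y i) < e}" (is "path_connected ?B")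
  unfolding path_connected_def
proof (intro ballI)
  fix a b assume a: "a \<in> ?B" and b: "b \<in> ?B"
  define g where "g = (\<lambda>t::real. \<lambda>i. (1 - t) * a i + t * b i)"
  have "path g" unfolding path_def g_def
    by (intro continuous_on_coordinatewise_then_product continuous_intros)
  moreover have "path_image g \<subseteq> ?B"
  proof
    fix z assume "z \<in> path_image g"
    then obtain t where t: "0 \<le> t" "t \<le> 1" "z = g t" by (auto simp: path_image_def)
    have "z \<in> Rn n" using a b t by (auto simp: Rn_def g_def)
    moreover have "dist (z i) (y i) < e" if "i \<in> I" for i
    proof -
      have "z i - y i = (1 - t) * (a i - y i) + t * (b i - y i)" using t by (simp add: g_def algebra_simps)
      then have "\<bar>z i - y i\<bar> \<le> (1 - t) * \<bar>a i - y i\<bar> + t * \<bar>b i - y i\<bar>"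
        using t by (metis abs_mult abs_of_nonneg abs_triangle_ineq diff_ge_0_iff_ge)
      also have "\<dots> < e"
        by (rule convex_bound_lt) (use a b that t in \<open>auto simp: dist_real_def\<close>)
      finally show ?thesis by (simp add: dist_real_def)
    qed
    ultimately show "z \<in> ?B" by auto
  qed
  moreover have "pathstart g = a" "pathfinish g = b"
    by (auto simp: pathstart_def pathfinish_def g_def)
  ultimately show "\<exists>g. path g \<and> path_image g \<subseteq> ?B \<and> pathstart g = a \<and> pathfinish g = b" by blast
qed

lemma box_open:
  fixes y :: pt
  assumes "finite I"
  shows "open_Rn n {z \<in> Rn n. \<forall>i\<in>I. dist (z i) (y i) < e}"
proof -
  have "open {f::pt. \<forall>i\<in>I. f (id i) \<in> ball (y i) e}"
    by (rule product_topology_basis') (use assms in auto)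
  moreover have "{z \<in> Rn n. \<forall>i\<in>I. dist (z i) (y i) < e} = Rn n \<inter> {f::pt. \<forall>i\<in>I. f (id i) \<in> ball (y i) e}"
    by (auto simp: dist_commute)
  ultimately show ?thesis unfolding open_Rn_def openin_open by blast
qed

lemma local_conn:
  assumes "open_Rn n U" "y \<in> U"
  shows "\<exists>B. open_Rn n B \<and> connected B \<and> y \<in> B \<and> B \<subseteq> U"
proof -
  obtain Ob where Ob: "open Ob" "U = Rn n \<inter> Ob" using assms(1) unfolding open_Rn_def openin_open by blast
  have "openin (product_topology (\<lambda>i. euclidean) UNIV) Ob" "y \<in> Ob" using Ob assms(2) by (auto simp: open_fun_def)
  from product_topology_open_contains_basis[OF this]
  obtain X where X: "y \<in> (\<Pi>\<^sub>E i\<in>UNIV. X i)" "\<And>i. open (X i)" "finite {i. X i \<noteq> UNIV}" "(\<Pi>\<^sub>E i\<in>UNIV. X i) \<subseteq> Ob"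
    by auto
  define I where "I = {i. X i \<noteq> UNIV}"
  have yX: "y i \<in> X i" for i using X(1) by auto
  have "\<exists>e>0. ball (y i) e \<subseteq> X i" for i using X(2) yX open_contains_ball by blast
  then obtain E where E: "\<And>i. E i > 0" "\<And>i. ball (y i) (E i) \<subseteq> X i" by metis
  define e where "e = Min (insert 1 (E ` I))"
  have fin: "finite I" using X(3) I_def by simp
  have e0: "e > 0" unfolding e_def using fin E(1) by auto
  have eE: "i \<in> I \<Longrightarrow> e \<le> E i" for i unfolding e_def using fin by auto
  define B where "B = {z \<in> Rn n. \<forall>i\<in>I. dist (z i) (y i) < e}"
  have "B \<subseteq> U"
  proof
    fix z assume z: "z \<in> B"
    have "z i \<in> X i" for i
    proof (cases "i \<in> I")
      case True
      then have "dist (y i) (z i) < E i" using z eE[OF True] by (auto simp: B_def dist_commute)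
      then show ?thesis using E(2)[of i] by auto
    next
      case False then show ?thesis by (auto simp: I_def)
    qed
    then have "z \<in> Ob" using X(4) by auto
    then show "z \<in> U" using z Ob by (auto simp: B_def)
  qed
  moreover have "y \<in> B" using e0 assms Ob by (auto simp: B_def)
  moreover have "open_Rn n B" unfolding B_def by (rule box_open[OF fin])
  moreover have "connected B" unfolding B_def by (rule path_connected_imp_connected[OF box_path_connected])
  ultimately show ?thesis by blast
qed

lemma open_component:
  assumes "open_Rn n U"
  shows "open_Rn n (connected_component_set U u)"
  unfolding open_Rn_def
proof (subst openin_subopen, intro ballI)
  fix y assume y: "y \<in> connected_component_set U u"
  then have yU: "y \<in> U" using connected_component_subset by blast
  obtain B where B: "open_Rn n B" "connected B" "y \<in> B" "B \<subseteq> U" using local_conn[OF assms yU] by blast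
  have "B \<subseteq> connected_component_set U y" by (rule connected_component_maximal) (use B in auto)
  also have "\<dots> = connected_component_set U u" using connected_component_eq[OF y] .
  finally show "\<exists>T. openin (top_of_set (Rn n)) T \<and> y \<in> T \<and> T \<subseteq> connected_component_set U u"
    using B unfolding open_Rn_def by blast
qed

lemma addp_subp: "addp (subp w u) u = w" "subp (addp w u) u = w"
  by (auto simp: addp_def subp_def)

lemma Rn_addp: "w \<in> Rn n \<Longrightarrow> u \<in> Rn n \<Longrightarrow> addp w u \<in> Rn n"
  by (auto simp: addp_def Rn_def)
lemma Rn_subp: "w \<in> Rn n \<Longrightarrow> u \<in> Rn n \<Longrightarrow> subp w u \<in> Rn n"
  by (auto simp: subp_def Rn_def)

lemma open_translate:
  assumes "open_Rn n C" "u \<in> Rn n"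
  shows "open_Rn n ((\<lambda>w. subp w u) ` C)"
proof -
  obtain Ob where Ob: "open Ob" "C = Rn n \<inter> Ob" using assms(1) unfolding open_Rn_def openin_open by blast
  have "open (UNIV \<inter> (\<lambda>w. addp w u) -` Ob)"
    using cont_addp[of UNIV u] Ob(1) continuous_on_open_vimage[of UNIV "\<lambda>w. addp w u"] by simp
  moreover have "(\<lambda>w. subp w u) ` C = Rn n \<inter> ((\<lambda>w. addp w u) -` Ob)"
  proof
    show "(\<lambda>w. subp w u) ` C \<subseteq> Rn n \<inter> (\<lambda>w. addp w u) -` Ob"
      using Ob assms(2) by (auto simp: addp_subp Rn_subp)
    show "Rn n \<inter> (\<lambda>w. addp w u) -` Ob \<subseteq> (\<lambda>w. subp w u) ` C"
    proof
      fix z assume z: "z \<in> Rn n \<inter> (\<lambda>w. addp w u) -` Ob"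
      then have "addp z u \<in> C" using Ob assms(2) Rn_addp by auto
      then show "z \<in> (\<lambda>w. subp w u) ` C" by (metis addp_subp(2) image_eqI)
    qed
  qed
  ultimately show ?thesis unfolding open_Rn_def openin_open by auto
qed



definition Mon :: "'w set \<Rightarrow> ('w \<Rightarrow> 'w \<Rightarrow> 'w) \<Rightarrow> 'w \<Rightarrow> 'w monoid" where
  "Mon F add z = \<lparr>carrier = F, mult = add, one = z\<rparr>"

lemma Mon_simps[simp]: "carrier (Mon F add z) = F" "mult (Mon F add z) = add" "one (Mon F add z) = z"
  by (auto simp: Mon_def)

locale fvs =
  fixes F :: "'w set" and add :: "'w \<Rightarrow> 'w \<Rightarrow> 'w" and sm :: "real \<Rightarrow> 'w \<Rightarrow> 'w" and z :: 'w
  assumes z_in: "z \<in> F"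
    and add_in: "v \<in> F \<Longrightarrow> w \<in> F \<Longrightarrow> add v w \<in> F"
    and sm_in: "v \<in> F \<Longrightarrow> sm a v \<in> F"
    and assoc: "u \<in> F \<Longrightarrow> v \<in> F \<Longrightarrow> w \<in> F \<Longrightarrow> add (add u v) w = add u (add v w)"
    and comm: "v \<in> F \<Longrightarrow> w \<in> F \<Longrightarrow> add v w = add w v"
    and zr: "v \<in> F \<Longrightarrow> add v z = v"
    and inv: "v \<in> F \<Longrightarrow> \<exists>w\<in>F. add v w = z"
    and sm1: "v \<in> F \<Longrightarrow> sm 1 v = v"
    and smsm: "v \<in> F \<Longrightarrow> sm a (sm b v) = sm (a * b) v"
    and smadd: "v \<in> F \<Longrightarrow> sm (a + b) v = add (sm a v) (sm b v)"
    and addsm: "v \<in> F \<Longrightarrow> w \<in> F \<Longrightarrow> sm a (add v w) = add (sm a v) (sm a w)"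
begin


lemma zl0: "v \<in> F \<Longrightarrow> add z v = v"
  using comm zr z_in by metis

lemma comm_monoid_M: "comm_monoid (Mon F add z)"
proof (rule comm_monoidI)
qed (auto simp: z_in add_in assoc zl0 intro: comm)

lemma cancel: assumes "a \<in> F" "b \<in> F" "c \<in> F" "add a c = add b c" shows "a = b"
proof -
  obtain d where d: "d \<in> F" "add c d = z" using inv assms by blast
  have "a = add a (add c d)" using d assms zr by simp
  also have "\<dots> = add (add a c) d" using assoc[of a c d] assms d(1) by simp
  also have "\<dots> = add (add b c) d" using assms by simp
  also have "\<dots> = add b (add c d)" using assoc[of b c d] assms d(1) by simp
  also have "\<dots> = b" using assms d zr by simp
  finally show ?thesis .
qed

lemma sm0: "v \<in> F \<Longrightarrow> sm 0 v = z"
proof -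
  assume v: "v \<in> F"
  have "add (sm 0 v) (sm 0 v) = add z (sm 0 v)"
    using smadd[OF v, of 0 0] zl0[OF sm_in[OF v]] by simp
  then show ?thesis using cancel[of "sm 0 v" z "sm 0 v"] sm_in[OF v] z_in by blast
qed

lemma smz: "sm a z = z"
  using sm0[OF z_in] smsm[OF z_in, of a 0] by simp

lemma add_neg: "v \<in> F \<Longrightarrow> add v (sm (-1) v) = z"
  using smadd[of v 1 "-1"] sm1 sm0 by simp

lemma zl: "v \<in> F \<Longrightarrow> add z v = v"
  using comm zr z_in by metis

lemma fp_closed: "f \<in> A \<rightarrow> F \<Longrightarrow> finprod (Mon F add z) f A \<in> F"
  using comm_monoid.finprod_closed[OF comm_monoid_M, of f A] by simp

lemma sm_finprod:
  assumes "finite A" "f \<in> A \<rightarrow> F"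
  shows "sm a (finprod (Mon F add z) f A) = finprod (Mon F add z) (\<lambda>j. sm a (f j)) A"
  using assms
proof (induction A rule: finite_induct)
  case empty
  then show ?case using comm_monoid.finprod_empty[OF comm_monoid_M, of f] 
      comm_monoid.finprod_empty[OF comm_monoid_M, of "\<lambda>j. sm a (f j)"] smz by simp
next
  case (insert j A)
  have fA: "f \<in> A \<rightarrow> F" "f j \<in> F" using insert by auto
  have gA: "(\<lambda>j. sm a (f j)) \<in> A \<rightarrow> F" using fA sm_in by auto
  have "sm a (finprod (Mon F add z) f (insert j A)) = sm a (add (f j) (finprod (Mon F add z) f A))"
    using comm_monoid.finprod_insert[OF comm_monoid_M, of A j f] insert fA by simp
  also have "\<dots> = add (sm a (f j)) (sm a (finprod (Mon F add z) f A))"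
    using addsm[OF fA(2) fp_closed[OF fA(1)]] by simp
  also have "\<dots> = add (sm a (f j)) (finprod (Mon F add z) (\<lambda>j. sm a (f j)) A)"
    using insert fA by simp
  also have "\<dots> = finprod (Mon F add z) (\<lambda>j. sm a (f j)) (insert j A)"
    using comm_monoid.finprod_insert[OF comm_monoid_M, of A j "\<lambda>j. sm a (f j)"] insert gA sm_in fA by simp
  finally show ?case .
qed

end



definition sadd :: "('k \<Rightarrow> pt) \<Rightarrow> ('k \<Rightarrow> pt) \<Rightarrow> 'k \<Rightarrow> pt" where "sadd s t = (\<lambda>k i. s k i + t k i)"
definition ssm :: "real \<Rightarrow> ('k \<Rightarrow> pt) \<Rightarrow> 'k \<Rightarrow> pt" where "ssm r s = (\<lambda>k i. r * s k i)"
definition ssub :: "('k \<Rightarrow> pt) \<Rightarrow> ('k \<Rightarrow> pt) \<Rightarrow> 'k \<Rightarrow> pt" where "ssub s t = (\<lambda>k i. s k i - t k i)"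

lemma zv_apply[simp]: "zv i = 0" by (simp add: zv_def)

lemma Rn_add: "v \<in> Rn n \<Longrightarrow> w \<in> Rn n \<Longrightarrow> (\<lambda>i. v i + w i) \<in> Rn n"
  by (auto simp: Rn_def)
lemma Rn_sm: "v \<in> Rn n \<Longrightarrow> (\<lambda>i. r * v i) \<in> Rn n"
  by (auto simp: Rn_def)
lemma Dm_Rn: "Dm n m f u v \<in> Rn m"
  by (auto simp: Rn_def Dm_def)

lemma FS_val: "s \<in> FS DX x \<Longrightarrow> s j \<in> Rn (fst j)"
  unfolding FS_def using zv_Rn by (cases j; cases "s j = zv") auto

lemma FS_supp: "s \<in> FS DX x \<Longrightarrow> s j \<noteq> zv \<Longrightarrow> j \<in> Jx DX x"
  unfolding FS_def by (cases j) auto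

lemma FS_fin: "s \<in> FS DX x \<Longrightarrow> finite {j. s j \<noteq> zv}"
  unfolding FS_def by auto

lemma FSI: "finite {j. s j \<noteq> zv} \<Longrightarrow> (\<And>j. s j \<noteq> zv \<Longrightarrow> j \<in> Jx DX x) \<Longrightarrow> (\<And>j. s j \<in> Rn (fst j))
   \<Longrightarrow> s \<in> FS DX x"
  unfolding FS_def by auto

lemma sadd_zv: "sadd s t j \<noteq> zv \<Longrightarrow> s j \<noteq> zv \<or> t j \<noteq> zv"
  by (auto simp: sadd_def zv_def)

lemma FS_sadd: assumes "s \<in> FS DX x" "t \<in> FS DX x" shows "sadd s t \<in> FS DX x"
proof (rule FSI)
  show "finite {j. sadd s t j \<noteq> zv}"
  proof (rule finite_subset[of _ "{j. s j \<noteq> zv} \<union> {j. t j \<noteq> zv}"])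
    show "{j. sadd s t j \<noteq> zv} \<subseteq> {j. s j \<noteq> zv} \<union> {j. t j \<noteq> zv}"
      using sadd_zv[of s t] by auto
  qed (use FS_fin[OF assms(1)] FS_fin[OF assms(2)] in simp)
  show "sadd s t j \<noteq> zv \<Longrightarrow> j \<in> Jx DX x" for j
    using sadd_zv[of s t j] FS_supp[OF assms(1), of j] FS_supp[OF assms(2), of j] by auto
  show "sadd s t j \<in> Rn (fst j)" for j
    using Rn_add[OF FS_val[OF assms(1)] FS_val[OF assms(2)]] by (simp add: sadd_def)
qed

lemma FS_ssm: assumes "s \<in> FS DX x" shows "ssm r s \<in> FS DX x"
proof (rule FSI)
  have *: "ssm r s j \<noteq> zv \<Longrightarrow> s j \<noteq> zv" for j by (auto simp: ssm_def zv_def)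
  show "finite {j. ssm r s j \<noteq> zv}"
  proof (rule finite_subset[of _ "{j. s j \<noteq> zv}"])
    show "{j. ssm r s j \<noteq> zv} \<subseteq> {j. s j \<noteq> zv}" using * by auto
  qed (use FS_fin[OF assms] in simp)
  show "ssm r s j \<noteq> zv \<Longrightarrow> j \<in> Jx DX x" for j
    using *[of j] FS_supp[OF assms, of j] by auto
  show "ssm r s j \<in> Rn (fst j)" for j
    using Rn_sm[OF FS_val[OF assms]] by (simp add: ssm_def)
qed

lemma ssub_alt: "ssub s t = sadd s (ssm (-1) t)"
  by (auto simp: ssub_def sadd_def ssm_def)

lemma FS_ssub: "s \<in> FS DX x \<Longrightarrow> t \<in> FS DX x \<Longrightarrow> ssub s t \<in> FS DX x"
  by (simp add: ssub_alt FS_sadd FS_ssm)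

lemma FS_0: "(\<lambda>k i. 0) \<in> FS DX x"
  by (rule FSI) (auto simp: zv_def[symmetric] zv_Rn)

lemma inj_apply: "Defs.inj j v k = (if k = j then v else zv)" by (simp add: Defs.inj_def)

lemma FS_inj: "j \<in> Jx DX x \<Longrightarrow> v \<in> Rn (fst j) \<Longrightarrow> Defs.inj j v \<in> FS DX x"
  by (rule FSI) (auto simp: inj_apply zv_Rn intro: finite_subset[of _ "{j}"])

lemma Nsp_FS: "a \<in> Nsp DX x \<Longrightarrow> a \<in> FS DX x"
proof (induction rule: Nsp.induct)
  case N0 then show ?case by (rule FS_0)
next
  case (Ngen j j' f v)
  have "(\<lambda>k i. Defs.inj j' (Dm (fst j) (fst j') f zv v) k i - Defs.inj j v k i)
        = ssub (Defs.inj j' (Dm (fst j) (fst j') f zv v)) (Defs.inj j v)" by (simp add: ssub_def)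
  then show ?case using Ngen FS_ssub FS_inj Dm_Rn by metis
next
  case (Nadd a b) then show ?case using FS_sadd[of a DX x b] by (simp add: sadd_def)
next
  case (Nsmul a r) then show ?case using FS_ssm[of a DX x r] by (simp add: ssm_def)
qed

lemma N_sadd: "a \<in> Nsp DX x \<Longrightarrow> b \<in> Nsp DX x \<Longrightarrow> sadd a b \<in> Nsp DX x"
  unfolding sadd_def by (rule Nadd)
lemma N_ssm: "a \<in> Nsp DX x \<Longrightarrow> ssm r a \<in> Nsp DX x"
  unfolding ssm_def by (rule Nsmul)
lemma N_ssub: "a \<in> Nsp DX x \<Longrightarrow> b \<in> Nsp DX x \<Longrightarrow> ssub a b \<in> Nsp DX x"
  by (simp add: ssub_alt N_sadd N_ssm)
lemma N_0: "(\<lambda>k i. 0) \<in> Nsp DX x" by (rule N0)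

lemma cls_mem: "s' \<in> cls DX x s \<longleftrightarrow> s' \<in> FS DX x \<and> ssub s' s \<in> Nsp DX x"
  by (simp add: cls_def ssub_def)

lemma cls_self: "s \<in> FS DX x \<Longrightarrow> s \<in> cls DX x s"
  unfolding cls_mem by (simp add: ssub_def N_0)

lemma ssub_trans: "ssub a c = sadd (ssub a b) (ssub b c)"
  by (auto simp: ssub_def sadd_def)

lemma ssub_swap: "ssub b a = ssm (-1) (ssub a b)"
  by (auto simp: ssub_def ssm_def)

lemma cls_eq: assumes "ssub s t \<in> Nsp DX x" shows "cls DX x s = cls DX x t"
proof -
  have "ssub t s \<in> Nsp DX x" using assms ssub_swap N_ssm by metis
  then show ?thesis using assms unfolding cls_mem set_eq_iff
    by (metis N_sadd ssub_trans)
qed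

lemma rep_cls: assumes "s \<in> FS DX x"
  shows "rep (cls DX x s) \<in> FS DX x" "ssub (rep (cls DX x s)) s \<in> Nsp DX x"
proof -
  have "rep (cls DX x s) \<in> cls DX x s" unfolding rep_def by (rule someI[of _ s]) (rule cls_self[OF assms])
  then show "rep (cls DX x s) \<in> FS DX x" "ssub (rep (cls DX x s)) s \<in> Nsp DX x" by (auto simp: cls_mem)
qed

lemma tx_add_cls: assumes "s \<in> FS DX x" "t \<in> FS DX x"
  shows "tx_add DX (x, cls DX x s) (x, cls DX x t) = (x, cls DX x (sadd s t))"
proof -
  let ?r1 = "rep (cls DX x s)" and ?r2 = "rep (cls DX x t)"
  have "ssub (sadd ?r1 ?r2) (sadd s t) = sadd (ssub ?r1 s) (ssub ?r2 t)"
    by (auto simp: ssub_def sadd_def fun_eq_iff)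
  then have "ssub (sadd ?r1 ?r2) (sadd s t) \<in> Nsp DX x" using rep_cls assms N_sadd by metis
  then show ?thesis unfolding tx_add_def using cls_eq by (simp add: sadd_def[symmetric])
qed

lemma tx_smul_cls: assumes "s \<in> FS DX x"
  shows "tx_smul DX r (x, cls DX x s) = (x, cls DX x (ssm r s))"
proof -
  let ?r1 = "rep (cls DX x s)"
  have "ssub (ssm r ?r1) (ssm r s) = ssm r (ssub ?r1 s)"
    by (auto simp: ssub_def ssm_def algebra_simps)
  then have "ssub (ssm r ?r1) (ssm r s) \<in> Nsp DX x" using rep_cls assms N_ssm by metis
  then show ?thesis unfolding tx_smul_def using cls_eq by (simp add: ssm_def[symmetric])
qed

lemma TXset_iff: "v \<in> TXset X DX \<longleftrightarrow> fst v \<in> X \<and> (\<exists>s\<in>FS DX (fst v). snd v = cls DX (fst v) s)"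
  by (cases v) (auto simp: TXset_def Tsp_def)

lemma TX_with_simps[simp]:
  "vs_tot (TX_with X DX D) = TXset X DX" "vs_totD (TX_with X DX D) = D"
  "vs_bas (TX_with X DX D) = X" "vs_basD (TX_with X DX D) = DX"
  "vs_prj (TX_with X DX D) = fst" "vs_add (TX_with X DX D) = tx_add DX"
  "vs_smul (TX_with X DX D) = tx_smul DX" "vs_zero (TX_with X DX D) = tx_zero DX"
  by (simp_all add: TX_with_def)

lemma fib_TX: "x \<in> X \<Longrightarrow> v \<in> fib (TX_with X DX D) x \<longleftrightarrow> (\<exists>s\<in>FS DX x. v = (x, cls DX x s))"
  by (cases v) (auto simp: fib_def TXset_iff)

lemma sadd_assoc: "sadd (sadd a b) c = sadd a (sadd b c)" by (auto simp: sadd_def fun_eq_iff)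
lemma sadd_comm: "sadd a b = sadd b a" by (auto simp: sadd_def fun_eq_iff)
lemma sadd_0: "sadd a (\<lambda>k i. 0) = a" by (auto simp: sadd_def fun_eq_iff)
lemma ssm_1: "ssm 1 a = a" by (auto simp: ssm_def fun_eq_iff)
lemma ssm_ssm: "ssm r (ssm q a) = ssm (r * q) a" by (auto simp: ssm_def fun_eq_iff)
lemma ssm_distr: "ssm (r + q) a = sadd (ssm r a) (ssm q a)" by (auto simp: ssm_def sadd_def fun_eq_iff algebra_simps)
lemma ssm_sadd: "ssm r (sadd a b) = sadd (ssm r a) (ssm r b)" by (auto simp: ssm_def sadd_def fun_eq_iff algebra_simps)

lemma fibre_vs_TX: "fibre_vs (TX_with X DX D)"
  unfolding fibre_vs_def
proof (intro ballI conjI allI)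
  fix x assume x: "x \<in> vs_bas (TX_with X DX D)"
  then have x: "x \<in> X" by simp
  let ?F = "fib (TX_with X DX D) x"
  note fx = fib_TX[OF x]
  show "vs_zero (TX_with X DX D) x \<in> ?F" using fx FS_0[of DX x] by (auto simp: tx_zero_def)
  show "vs_add (TX_with X DX D) v w \<in> ?F" if "v \<in> ?F" "w \<in> ?F" for v w
    using that by (auto simp: fx tx_add_cls FS_sadd)
  show "vs_smul (TX_with X DX D) a v \<in> ?F" if "v \<in> ?F" for a v
    using that by (auto simp: fx tx_smul_cls FS_ssm)
  show "vs_add (TX_with X DX D) (vs_add (TX_with X DX D) u v) w =
       vs_add (TX_with X DX D) u (vs_add (TX_with X DX D) v w)" if "u \<in> ?F" "v \<in> ?F" "w \<in> ?F" for u v w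
    using that by (auto simp: fx tx_add_cls FS_sadd sadd_assoc)
  show "vs_add (TX_with X DX D) v w = vs_add (TX_with X DX D) w v" if "v \<in> ?F" "w \<in> ?F" for v w
    using that by (auto simp: fx tx_add_cls FS_sadd sadd_comm)
  show "vs_add (TX_with X DX D) v (vs_zero (TX_with X DX D) x) = v" if "v \<in> ?F" for v
    using that FS_0[of DX x] by (auto simp: fx tx_add_cls tx_zero_def sadd_0)
  show "\<exists>w\<in>?F. vs_add (TX_with X DX D) v w = vs_zero (TX_with X DX D) x" if vF: "v \<in> ?F" for v
  proof -
    obtain s where s: "s \<in> FS DX x" "v = (x, cls DX x s)" using vF fx[of v DX D] by auto
    have "sadd s (ssm (-1) s) = (\<lambda>k i. 0)" by (auto simp: sadd_def ssm_def)
    then show ?thesis using s FS_ssm[OF s(1)]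
      by (intro bexI[of _ "(x, cls DX x (ssm (-1) s))"]) (auto simp: fx tx_add_cls tx_zero_def)
  qed
  show "vs_smul (TX_with X DX D) 1 v = v" if "v \<in> ?F" for v
    using that by (auto simp: fx tx_smul_cls ssm_1)
  show "vs_smul (TX_with X DX D) a (vs_smul (TX_with X DX D) b v) = vs_smul (TX_with X DX D) (a * b) v"
    if "v \<in> ?F" for a b v
    using that by (auto simp: fx tx_smul_cls FS_ssm ssm_ssm)
  show "vs_smul (TX_with X DX D) (a + b) v = vs_add (TX_with X DX D) (vs_smul (TX_with X DX D) a v) (vs_smul (TX_with X DX D) b v)"
    if "v \<in> ?F" for a b v
    using that by (auto simp: fx tx_smul_cls tx_add_cls FS_ssm ssm_distr)
  show "vs_smul (TX_with X DX D) a (vs_add (TX_with X DX D) v w) = vs_add (TX_with X DX D) (vs_smul (TX_with X DX D) a v) (vs_smul (TX_with X DX D) a w)"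
    if "v \<in> ?F" "w \<in> ?F" for a v w
    using that by (auto simp: fx tx_smul_cls tx_add_cls FS_ssm FS_sadd ssm_sadd)
qed



lemma diffeologyI:
  assumes "\<And>n U p. D n U p \<Longrightarrow> open_Rn n U \<and> p ` U \<subseteq> X"
    and "\<And>n U x. open_Rn n U \<Longrightarrow> x \<in> X \<Longrightarrow> D n U (\<lambda>_. x)"
    and "\<And>n U p m W f. D n U p \<Longrightarrow> open_Rn m W \<Longrightarrow> smooth_map m W n U f \<Longrightarrow> D m W (p \<circ> f)"
    and "\<And>n U p. open_Rn n U \<Longrightarrow> p ` U \<subseteq> X \<Longrightarrow>
        (\<forall>u\<in>U. \<exists>W. open_Rn n W \<and> u \<in> W \<and> W \<subseteq> U \<and> D n W p) \<Longrightarrow> D n U p"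
    and "\<And>n U p q. D n U p \<Longrightarrow> (\<forall>u\<in>U. p u = q u) \<Longrightarrow> D n U q"
  shows "diffeology X D"
  unfolding diffeology_def
proof (intro conjI)
  show "\<forall>n U p. D n U p \<longrightarrow> open_Rn n U \<and> p ` U \<subseteq> X" using assms(1) by blast
  show "\<forall>n U x. open_Rn n U \<and> x \<in> X \<longrightarrow> D n U (\<lambda>_. x)" using assms(2) by blast
  show "\<forall>n U p m W f. D n U p \<and> open_Rn m W \<and> smooth_map m W n U f \<longrightarrow> D m W (p \<circ> f)" using assms(3) by blast
  show "\<forall>n U p. open_Rn n U \<and> p ` U \<subseteq> X \<and>
        (\<forall>u\<in>U. \<exists>W. open_Rn n W \<and> u \<in> W \<and> W \<subseteq> U \<and> D n W p) \<longrightarrow> D n U p" using assms(4) by blast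
  show "\<forall>n U p q. D n U p \<and> (\<forall>u\<in>U. p u = q u) \<longrightarrow> D n U q" using assms(5) by blast
qed

lemma diffeologyD:
  assumes "diffeology X D"
  shows "\<And>n U p. D n U p \<Longrightarrow> open_Rn n U \<and> p ` U \<subseteq> X"
    and "\<And>n U x. open_Rn n U \<Longrightarrow> x \<in> X \<Longrightarrow> D n U (\<lambda>_. x)"
    and "\<And>n U p m W f. D n U p \<Longrightarrow> open_Rn m W \<Longrightarrow> smooth_map m W n U f \<Longrightarrow> D m W (p \<circ> f)"
    and "\<And>n U p. open_Rn n U \<Longrightarrow> p ` U \<subseteq> X \<Longrightarrow>
        (\<forall>u\<in>U. \<exists>W. open_Rn n W \<and> u \<in> W \<and> W \<subseteq> U \<and> D n W p) \<Longrightarrow> D n U p"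
    and "\<And>n U p q. D n U p \<Longrightarrow> (\<forall>u\<in>U. p u = q u) \<Longrightarrow> D n U q"
proof -
  note C = assms[unfolded diffeology_def]
  note P1 = conjunct1[OF C] and P2 = conjunct1[OF conjunct2[OF C]]
    and P3 = conjunct1[OF conjunct2[OF conjunct2[OF C]]]
    and P4 = conjunct1[OF conjunct2[OF conjunct2[OF conjunct2[OF C]]]]
    and P5 = conjunct2[OF conjunct2[OF conjunct2[OF conjunct2[OF C]]]]
  show "\<And>n U p. D n U p \<Longrightarrow> open_Rn n U \<and> p ` U \<subseteq> X" using P1 by blast
  show "\<And>n U x. open_Rn n U \<Longrightarrow> x \<in> X \<Longrightarrow> D n U (\<lambda>_. x)" using P2 by blast
  show "\<And>n U p m W f. D n U p \<Longrightarrow> open_Rn m W \<Longrightarrow> smooth_map m W n U f \<Longrightarrow> D m W (p \<circ> f)" using P3 by blast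
  show "\<And>n U p. open_Rn n U \<Longrightarrow> p ` U \<subseteq> X \<Longrightarrow>
        (\<forall>u\<in>U. \<exists>W. open_Rn n W \<and> u \<in> W \<and> W \<subseteq> U \<and> D n W p) \<Longrightarrow> D n U p" using P4 by blast
  show "\<And>n U p q. D n U p \<Longrightarrow> (\<forall>u\<in>U. p u = q u) \<Longrightarrow> D n U q" using P5 by blast
qed

definition pull :: "'b set \<Rightarrow> ('b \<Rightarrow> 'c) \<Rightarrow> 'c dfg \<Rightarrow> 'b dfg" where
  "pull S f DY k V q \<longleftrightarrow> open_Rn k V \<and> q ` V \<subseteq> S \<and> DY k V (f \<circ> q)"

lemma smooth_map_img: "smooth_map m W n U f \<Longrightarrow> f ` W \<subseteq> U"
  by (simp add: smooth_map_def)

lemma diffeology_pull: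
  assumes DY: "diffeology Y DY" and fS: "f ` S \<subseteq> Y"
  shows "diffeology S (pull S f DY)"
proof (rule diffeologyI)
  note D = diffeologyD[OF DY]
  show "pull S f DY n U p \<Longrightarrow> open_Rn n U \<and> p ` U \<subseteq> S" for n U p by (simp add: pull_def)
  show "pull S f DY n U (\<lambda>_. x)" if "open_Rn n U" "x \<in> S" for n U x
  proof -
    have "f x \<in> Y" using fS that by auto
    then have "DY n U (\<lambda>_. f x)" using D(2) that by blast
    then show ?thesis using that by (auto simp: pull_def o_def)
  qed
  show "pull S f DY m W (p \<circ> g)" if "pull S f DY n U p" "open_Rn m W" "smooth_map m W n U g" for n U p m W g
  proof -
    have "DY m W ((f \<circ> p) \<circ> g)" using D(3) that by (auto simp: pull_def)
    moreover have "(p \<circ> g) ` W \<subseteq> S" using that smooth_map_img by (fastforce simp: pull_def)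
    ultimately show ?thesis using that by (simp add: pull_def o_assoc)
  qed
  show "pull S f DY n U p" if "open_Rn n U" "p ` U \<subseteq> S"
      "\<forall>u\<in>U. \<exists>W. open_Rn n W \<and> u \<in> W \<and> W \<subseteq> U \<and> pull S f DY n W p" for n U p
  proof -
    have "(f \<circ> p) ` U \<subseteq> Y" using that(2) fS by auto
    then have "DY n U (f \<circ> p)"
      by (rule D(4)[OF that(1)]) (use that(3) in \<open>auto simp: pull_def\<close>)
    then show ?thesis using that by (simp add: pull_def)
  qed
  show "pull S f DY n U q" if "pull S f DY n U p" "\<forall>u\<in>U. p u = q u" for n U p q
  proof -
    have "DY n U (f \<circ> q)" by (rule D(5)[of n U "f \<circ> p"]) (use that in \<open>auto simp: pull_def\<close>)
    moreover have "q ` U \<subseteq> S" using that by (auto simp: pull_def)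
    ultimately show ?thesis using that by (simp add: pull_def)
  qed
qed

lemma diffeology_inter:
  assumes "diffeology S D1" "diffeology S D2"
  shows "diffeology S (\<lambda>k V q. D1 k V q \<and> D2 k V q)"
proof (rule diffeologyI)
  note A = diffeologyD[OF assms(1)] and B = diffeologyD[OF assms(2)]
  show "\<And>n U p. D1 n U p \<and> D2 n U p \<Longrightarrow> open_Rn n U \<and> p ` U \<subseteq> S" using A(1) by blast
  show "\<And>n U x. open_Rn n U \<Longrightarrow> x \<in> S \<Longrightarrow> D1 n U (\<lambda>_. x) \<and> D2 n U (\<lambda>_. x)" using A(2) B(2) by blast
  show "\<And>n U p m W f. D1 n U p \<and> D2 n U p \<Longrightarrow> open_Rn m W \<Longrightarrow> smooth_map m W n U f \<Longrightarrow> D1 m W (p \<circ> f) \<and> D2 m W (p \<circ> f)"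
    using A(3) B(3) by blast
  show "\<And>n U p. open_Rn n U \<Longrightarrow> p ` U \<subseteq> S \<Longrightarrow>
        (\<forall>u\<in>U. \<exists>W. open_Rn n W \<and> u \<in> W \<and> W \<subseteq> U \<and> D1 n W p \<and> D2 n W p) \<Longrightarrow> D1 n U p \<and> D2 n U p"
  proof -
    fix n U p assume a: "open_Rn n U" "p ` U \<subseteq> S" "\<forall>u\<in>U. \<exists>W. open_Rn n W \<and> u \<in> W \<and> W \<subseteq> U \<and> D1 n W p \<and> D2 n W p"
    have "D1 n U p" by (rule A(4)) (use a in blast)+
    moreover have "D2 n U p" by (rule B(4)) (use a in blast)+
    ultimately show "D1 n U p \<and> D2 n U p" by blast
  qed
  show "\<And>n U p q. D1 n U p \<and> D2 n U p \<Longrightarrow> \<forall>u\<in>U. p u = q u \<Longrightarrow> D1 n U q \<and> D2 n U q"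
    using A(5) B(5) by blast
qed

lemma diffeology_Inf:
  assumes "\<And>D. P D \<Longrightarrow> diffeology S D" "P D0"
  shows "diffeology S (\<lambda>k V q. \<forall>D. P D \<longrightarrow> D k V q)"
proof (rule diffeologyI)
  show "open_Rn n U \<and> p ` U \<subseteq> S" if "\<forall>D. P D \<longrightarrow> D n U p" for n U p
    using diffeologyD(1)[OF assms(1)[OF assms(2)]] that assms(2) by blast
  show "\<forall>D. P D \<longrightarrow> D n U (\<lambda>_. x)" if "open_Rn n U" "x \<in> S" for n U x
  proof (intro allI impI)
    fix D assume "P D" then show "D n U (\<lambda>_. x)" using diffeologyD(2)[OF assms(1)[OF \<open>P D\<close>]] that by blast
  qed
  show "\<forall>D. P D \<longrightarrow> D m W (p \<circ> f)" if "\<forall>D. P D \<longrightarrow> D n U p" "open_Rn m W" "smooth_map m W n U f" for n U p m W f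
  proof (intro allI impI)
    fix D assume "P D" then show "D m W (p \<circ> f)" using diffeologyD(3)[OF assms(1)[OF \<open>P D\<close>]] that by blast
  qed
  show "\<forall>D. P D \<longrightarrow> D n U p" if a: "open_Rn n U" "p ` U \<subseteq> S"
        "\<forall>u\<in>U. \<exists>W. open_Rn n W \<and> u \<in> W \<and> W \<subseteq> U \<and> (\<forall>D. P D \<longrightarrow> D n W p)" for n U p
  proof (intro allI impI)
    fix D assume "P D"
    have "\<forall>u\<in>U. \<exists>W. open_Rn n W \<and> u \<in> W \<and> W \<subseteq> U \<and> D n W p" using a(3) \<open>P D\<close> by blast
    then show "D n U p" using diffeologyD(4)[OF assms(1)[OF \<open>P D\<close>]] a(1,2) by blast
  qed
  show "\<forall>D. P D \<longrightarrow> D n U q" if "\<forall>D. P D \<longrightarrow> D n U p" "\<forall>u\<in>U. p u = q u" for n U p q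
  proof (intro allI impI)
    fix D assume "P D" then show "D n U q" using diffeologyD(5)[OF assms(1)[OF \<open>P D\<close>]] that by blast
  qed
qed

section \<open>smooth maps\<close>

lemma smooth_map_const: "u \<in> U \<Longrightarrow> U \<subseteq> Rn n \<Longrightarrow> smooth_map k W n U (\<lambda>_. u)"
  by (auto simp: smooth_map_def smooth_const)

lemma smooth_map_transl:
  assumes "\<And>w. w \<in> V \<Longrightarrow> addp w u \<in> U" "U \<subseteq> Rn n"
  shows "smooth_map n V n U (\<lambda>w. addp w u)"
proof -
  have "(\<lambda>x. addp x u j) = (\<lambda>x. x j + u j)" for j by (simp add: addp_def)
  then show ?thesis using assms by (auto simp: smooth_map_def smooth_coord)
qed

lemma smooth_map_id: "U \<subseteq> Rn n \<Longrightarrow> smooth_map n U n U (\<lambda>x. x)"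
  using smooth_map_transl[of U zv U n] by (simp add: addp_def zv_def)

lemma smooth_map_shiftf:
  assumes f: "smooth_map n U m V f" and W: "\<And>w. w \<in> W \<Longrightarrow> addp w u \<in> U \<and> subp (f (addp w u)) (f u) \<in> V'"
    and u: "u \<in> U"
  shows "smooth_map n W m V' (\<lambda>w. subp (f (addp w u)) (f u))"
  unfolding smooth_map_def
proof (intro conjI allI impI)
  show "(\<lambda>w. subp (f (addp w u)) (f u)) ` W \<subseteq> V'" using W by auto
  show "(\<lambda>w. subp (f (addp w u)) (f u)) ` W \<subseteq> Rn m"
    using f W u by (auto simp: smooth_map_def intro!: Rn_subp)
  fix j assume j: "j < m"
  have "smooth_real n U (\<lambda>y. f y j)" using f j by (simp add: smooth_map_def)
  then have "Ck n k W (\<lambda>w. f (addp w u) j - f u j)" for k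
    using Ck_shift[of n k U "\<lambda>y. f y j" W u "f u j"] W by (auto simp: smooth_real_def)
  then show "smooth_real n W (\<lambda>x. subp (f (addp x u)) (f u) j)"
    by (simp add: smooth_real_def subp_def)
qed

lemma Dm_transl:
  assumes "v \<in> Rn n"
  shows "Dm n n (\<lambda>w. addp w u) w0 v = v"
proof
  fix j
  have "(\<lambda>y. addp y u j) = (\<lambda>y. y j + u j)" by (simp add: addp_def)
  then have "(\<Sum>i<n. pd i (\<lambda>y. addp y u j) w0 * v i) = (\<Sum>i<n. (if i = j then v i else 0))"
    by (intro sum.cong) (auto simp: pd_coord)
  also have "\<dots> = (if j < n then v j else 0)" by (simp add: sum.delta)
  finally show "Dm n n (\<lambda>w. addp w u) w0 v j = v j"
    using assms by (auto simp: Dm_def Rn_def)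
qed

lemma addp_zv: "addp zv u = u" by (simp add: addp_def zv_def)
lemma subp_self: "subp u u = zv" by (simp add: subp_def zv_def)

lemma Dm_shiftf: "Dm n m (\<lambda>w. subp (f (addp w u)) (f u)) zv v = Dm n m f u v"
proof -
  have "(\<lambda>w. subp (f (addp w u)) (f u) j) = (\<lambda>w. (\<lambda>y. f y j) (addp w u) - f u j)" for j
    by (simp add: subp_def)
  then have *: "pd i (\<lambda>w. subp (f (addp w u)) (f u) j) zv = pd i (\<lambda>y. f y j) u" for i j
    using pd_shift[of i "\<lambda>y. f y j" u "f u j"] by (simp add: addp_zv)
  show ?thesis unfolding Dm_def
    by (rule ext) (rule if_cong[OF refl sum.cong[OF refl] refl], simp only: *)
qed

section \<open>translated plots\<close>

definition Jpl :: "'a plot \<Rightarrow> pt \<Rightarrow> 'a plot" where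
  "Jpl j u = (fst j, (\<lambda>w. subp w u) ` connected_component_set (fst (snd j)) u,
              \<lambda>w. snd (snd j) (addp w u))"

lemma Tleg_eq: "Tleg DX j z = (snd (snd j) (fst z),
   cls DX (snd (snd j) (fst z)) (Defs.inj (Jpl j (fst z)) (snd z)))"
proof -
  have "Jpl j u = (fst j, (\<lambda>w i. w i - u i) ` connected_component_set (fst (snd j)) u,
              \<lambda>w. snd (snd j) (\<lambda>i. w i + u i))" for u
    by (simp add: Jpl_def subp_def[abs_def] addp_def[abs_def])
  then show ?thesis by (cases j) (simp add: Tleg_def Let_def)
qed

lemma subp_in_img: "w \<in> C \<Longrightarrow> subp w u \<in> (\<lambda>w. subp w u) ` C" by blast

lemma img_subp_iff: "w \<in> (\<lambda>w. subp w u) ` C \<longleftrightarrow> addp w u \<in> C"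
proof
  assume "w \<in> (\<lambda>w. subp w u) ` C"
  then obtain w' where "w' \<in> C" "w = subp w' u" by blast
  then show "addp w u \<in> C" by (simp add: addp_subp)
next
  assume "addp w u \<in> C"
  then have "subp (addp w u) u \<in> (\<lambda>w. subp w u) ` C" by blast
  then show "w \<in> (\<lambda>w. subp w u) ` C" by (simp add: addp_subp)
qed

lemma Jpl_props:
  assumes X: "diffeology X DX" and p: "DX n U p" and u: "u \<in> U"
  defines "C \<equiv> connected_component_set U u"
  shows "open_Rn n ((\<lambda>w. subp w u) ` C)"
    and "smooth_map n ((\<lambda>w. subp w u) ` C) n U (\<lambda>w. addp w u)"
    and "DX n ((\<lambda>w. subp w u) ` C) (\<lambda>w. p (addp w u))"
    and "Jpl (n, U, p) u \<in> Jx DX (p u)"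
    and "(\<lambda>w. addp w u) \<in> dsx_mor (Jpl (n, U, p) u) (n, U, p)"
    and "Jpl (n, U, p) u \<in> plots DX"
proof -
  note D = diffeologyD[OF X]
  have oU: "open_Rn n U" using D(1)[OF p] by blast
  have URn: "U \<subseteq> Rn n" using open_Rn_sub[OF oU] .
  have CU: "C \<subseteq> U" unfolding C_def by (rule connected_component_subset)
  show o: "open_Rn n ((\<lambda>w. subp w u) ` C)"
    unfolding C_def by (rule open_translate[OF open_component[OF oU]]) (use u URn in auto)
  show sm: "smooth_map n ((\<lambda>w. subp w u) ` C) n U (\<lambda>w. addp w u)"
    by (rule smooth_map_transl) (use CU URn in \<open>auto simp: img_subp_iff\<close>)
  have "DX n ((\<lambda>w. subp w u) ` C) (p \<circ> (\<lambda>w. addp w u))" by (rule D(3)[OF p o sm])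
  then show pl: "DX n ((\<lambda>w. subp w u) ` C) (\<lambda>w. p (addp w u))" by (simp add: o_def)
  have uC: "u \<in> C" unfolding C_def using u by simp
  have conn: "connected ((\<lambda>w. subp w u) ` C)"
    by (rule connected_continuous_image[OF cont_subp]) (simp add: C_def)
  have z: "zv \<in> (\<lambda>w. subp w u) ` C" using uC subp_self by (metis image_eqI)
  show "Jpl (n, U, p) u \<in> Jx DX (p u)"
    using pl conn z by (simp add: Jx_def Jpl_def C_def addp_zv)
  show "(\<lambda>w. addp w u) \<in> dsx_mor (Jpl (n, U, p) u) (n, U, p)"
    using sm by (simp add: dsx_mor_def Jpl_def C_def)
  show "Jpl (n, U, p) u \<in> plots DX" using pl by (simp add: plots_def Jpl_def C_def)
qed

lemma Jpl_zero:
  assumes "(n, U, p) \<in> Jx DX x"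
  shows "Jpl (n, U, p) zv = (n, U, p)"
proof -
  have c: "connected U" "zv \<in> U" using assms by (auto simp: Jx_def)
  have "connected_component_set U zv = U" using c connected_component_eq_self by blast
  moreover have "subp w zv = w" "addp w zv = w" for w
    by (auto simp: subp_def addp_def zv_def)
  ultimately show ?thesis by (simp add: Jpl_def)
qed



lemma TUobj_simps[simp]:
  "vs_tot (TUobj (n, U, p)) = {z. fst z \<in> U \<and> snd z \<in> Rn n}"
  "vs_totD (TUobj (n, U, p)) = (\<lambda>k W g. open_Rn k W \<and> smooth_map k W n U (fst \<circ> g)
                              \<and> smooth_map k W n (Rn n) (snd \<circ> g))"
  "vs_bas (TUobj (n, U, p)) = U" "vs_basD (TUobj (n, U, p)) = std_dfg n U"
  "vs_prj (TUobj (n, U, p)) = fst"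
  "vs_add (TUobj (n, U, p)) = (\<lambda>a b. (fst a, \<lambda>i. snd a i + snd b i))"
  "vs_smul (TUobj (n, U, p)) = (\<lambda>r a. (fst a, \<lambda>i. r * snd a i))"
  "vs_zero (TUobj (n, U, p)) = (\<lambda>u. (u, zv))"
  by (simp_all add: TUobj_def)

lemma tx_add_mem: assumes "a \<in> TXset X DX" "b \<in> TXset X DX" "fst a = fst b"
  shows "tx_add DX a b \<in> TXset X DX"
proof -
  obtain s where s: "s \<in> FS DX (fst a)" "a = (fst a, cls DX (fst a) s)" using assms(1) TXset_iff[of a] by (cases a) auto
  obtain t where t: "t \<in> FS DX (fst a)" "b = (fst a, cls DX (fst a) t)" using assms(2,3) TXset_iff[of b] by (cases b) auto
  have "tx_add DX a b = (fst a, cls DX (fst a) (sadd s t))" using s t tx_add_cls by metis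
  then show ?thesis using FS_sadd[OF s(1) t(1)] assms(1) by (auto simp: TXset_iff)
qed

lemma tx_add_fst: "fst (tx_add DX a b) = fst a" by (simp add: tx_add_def)
lemma tx_smul_fst: "fst (tx_smul DX r a) = fst a" by (simp add: tx_smul_def)
lemma tx_zero_fst: "fst (tx_zero DX x) = x" by (simp add: tx_zero_def)

lemma tx_smul_mem: assumes "a \<in> TXset X DX"
  shows "tx_smul DX r a \<in> TXset X DX"
proof -
  obtain s where s: "s \<in> FS DX (fst a)" "a = (fst a, cls DX (fst a) s)" using assms(1) TXset_iff[of a] by (cases a) auto
  have "tx_smul DX r a = (fst a, cls DX (fst a) (ssm r s))" using s tx_smul_cls by metis
  then show ?thesis using FS_ssm[OF s(1)] assms(1) by (auto simp: TXset_iff)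
qed

lemma tx_zero_mem: "x \<in> X \<Longrightarrow> tx_zero DX x \<in> TXset X DX"
  using FS_0[of DX x] by (auto simp: TXset_iff tx_zero_def)

lemma Tleg_fst: "fst (Tleg DX j z) = snd (snd j) (fst z)" by (simp add: Tleg_eq)

lemma Tleg_mem:
  assumes X: "diffeology X DX" and p: "DX n U p" and u: "u \<in> U" and v: "v \<in> Rn n"
  shows "Tleg DX (n, U, p) (u, v) \<in> TXset X DX"
proof -
  have "p u \<in> X" using diffeologyD(1)[OF X p] u by blast
  moreover have "Defs.inj (Jpl (n, U, p) u) v \<in> FS DX (p u)"
    by (rule FS_inj[OF Jpl_props(4)[OF X p u]]) (simp add: Jpl_def v)
  ultimately show ?thesis by (auto simp: TXset_iff Tleg_eq)
qed

definition Dall :: "'a set \<Rightarrow> 'a dfg \<Rightarrow> 'a tx dfg" where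
  "Dall X DX = pull (TXset X DX) fst DX"

lemma fst_TXset: "fst ` TXset X DX \<subseteq> X" by (auto simp: TXset_iff)

lemma diffeology_Dall: "diffeology X DX \<Longrightarrow> diffeology (TXset X DX) (Dall X DX)"
  unfolding Dall_def by (rule diffeology_pull[OF _ fst_TXset])

lemma is_dvs_Dall:
  assumes X: "diffeology X DX"
  shows "is_dvs (TX_with X DX (Dall X DX))"
  unfolding is_dvs_def is_vsd_def
proof (intro conjI allI impI)
  show "diffeology (vs_tot (TX_with X DX (Dall X DX))) (vs_totD (TX_with X DX (Dall X DX)))"
    using diffeology_Dall[OF X] by simp
  show "diffeology (vs_bas (TX_with X DX (Dall X DX))) (vs_basD (TX_with X DX (Dall X DX)))"
    using X by simp
  show "dsmooth (vs_tot (TX_with X DX (Dall X DX))) (vs_totD (TX_with X DX (Dall X DX)))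
     (vs_bas (TX_with X DX (Dall X DX))) (vs_basD (TX_with X DX (Dall X DX))) (vs_prj (TX_with X DX (Dall X DX)))"
    using fst_TXset[of X DX] by (auto simp: dsmooth_def Dall_def pull_def)
  show "fibre_vs (TX_with X DX (Dall X DX))" by (rule fibre_vs_TX)
  fix n U
  show "vs_totD (TX_with X DX (Dall X DX)) n U (\<lambda>u. vs_add (TX_with X DX (Dall X DX)) (a u) (b u))"
    if "vs_totD (TX_with X DX (Dall X DX)) n U a \<and> vs_totD (TX_with X DX (Dall X DX)) n U b \<and>
        (\<forall>u\<in>U. vs_prj (TX_with X DX (Dall X DX)) (a u) = vs_prj (TX_with X DX (Dall X DX)) (b u))" for a b
  proof -
    have "fst \<circ> (\<lambda>u. tx_add DX (a u) (b u)) = fst \<circ> a" by (auto simp: tx_add_fst)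
    moreover have "(\<lambda>u. tx_add DX (a u) (b u)) ` U \<subseteq> TXset X DX"
    proof (rule image_subsetI)
      fix u assume "u \<in> U"
      then show "tx_add DX (a u) (b u) \<in> TXset X DX"
        using that by (intro tx_add_mem) (auto simp: Dall_def pull_def)
    qed
    ultimately show ?thesis using that by (simp add: Dall_def pull_def)
  qed
  show "vs_totD (TX_with X DX (Dall X DX)) n U (\<lambda>u. vs_smul (TX_with X DX (Dall X DX)) (r u) (a u))"
    if "open_Rn n U \<and> smooth_real n U r \<and> vs_totD (TX_with X DX (Dall X DX)) n U a" for r a
  proof -
    have "fst \<circ> (\<lambda>u. tx_smul DX (r u) (a u)) = fst \<circ> a" by (auto simp: tx_smul_fst)
    moreover have "(\<lambda>u. tx_smul DX (r u) (a u)) ` U \<subseteq> TXset X DX"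
    proof (rule image_subsetI)
      fix u assume "u \<in> U"
      then show "tx_smul DX (r u) (a u) \<in> TXset X DX"
        using that by (intro tx_smul_mem) (auto simp: Dall_def pull_def)
    qed
    ultimately show ?thesis using that by (simp add: Dall_def pull_def)
  qed
  show "vs_totD (TX_with X DX (Dall X DX)) n U (\<lambda>u. vs_zero (TX_with X DX (Dall X DX)) (q u))"
    if "vs_basD (TX_with X DX (Dall X DX)) n U q" for q
  proof -
    have q: "DX n U q" using that by simp
    have "fst \<circ> (\<lambda>u. tx_zero DX (q u)) = q" by (auto simp: tx_zero_fst)
    moreover have "(\<lambda>u. tx_zero DX (q u)) ` U \<subseteq> TXset X DX"
      using diffeologyD(1)[OF X q] by (intro image_subsetI tx_zero_mem) auto
    ultimately show ?thesis using q diffeologyD(1)[OF X q] by (simp add: Dall_def pull_def)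
  qed
qed

lemma gens_props:
  assumes X: "diffeology X DX" and g: "(k, W, q) \<in> hector_gens DX"
  obtains n U p g' where "DX n U p" "q = Tleg DX (n, U, p) \<circ> g'" "open_Rn k W"
    "smooth_map k W n U (fst \<circ> g')" "smooth_map k W n (Rn n) (snd \<circ> g')"
  using g by (auto simp: hector_gens_def plots_def)

lemma gens_Dall:
  assumes X: "diffeology X DX" and g: "(k, W, q) \<in> hector_gens DX"
  shows "Dall X DX k W q"
proof -
  obtain n U p g' where a: "DX n U p" "q = Tleg DX (n, U, p) \<circ> g'" "open_Rn k W"
    "smooth_map k W n U (fst \<circ> g')" "smooth_map k W n (Rn n) (snd \<circ> g')"
    using gens_props[OF X g] by metis
  have "q ` W \<subseteq> TXset X DX"
  proof
    fix y assume "y \<in> q ` W"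
    then obtain w where w: "w \<in> W" "y = Tleg DX (n, U, p) (g' w)" using a(2) by auto
    have "fst (g' w) \<in> U" "snd (g' w) \<in> Rn n" using smooth_map_img[OF a(4)] smooth_map_img[OF a(5)] w(1) by auto
    then show "y \<in> TXset X DX" using Tleg_mem[OF X a(1)] w(2) by (metis prod.collapse)
  qed
  moreover have "fst \<circ> q = p \<circ> (fst \<circ> g')" using a(2) by (auto simp: Tleg_fst)
  moreover have "DX k W (p \<circ> (fst \<circ> g'))" by (rule diffeologyD(3)[OF X a(1) a(3) a(4)])
  ultimately show ?thesis using a(3) by (simp add: Dall_def pull_def)
qed

lemma hector_alt: "hector X DX = (\<lambda>k W q. \<forall>D. (diffeology (TXset X DX) D \<and>
      (\<forall>(k', W', q') \<in> hector_gens DX. D k' W' q')) \<longrightarrow> D k W q)"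
  by (simp add: hector_def fun_eq_iff)

lemma Dall_gens: "diffeology X DX \<Longrightarrow> (\<forall>(k', W', q') \<in> hector_gens DX. Dall X DX k' W' q')"
  using gens_Dall by blast

lemma hector_diff: "diffeology X DX \<Longrightarrow> diffeology (TXset X DX) (hector X DX)"
  unfolding hector_alt
  by (rule diffeology_Inf[of _ _ "Dall X DX"]) (auto simp: diffeology_Dall Dall_gens)

lemma hector_gen: "(k, W, q) \<in> hector_gens DX \<Longrightarrow> hector X DX k W q"
  unfolding hector_def by blast

lemma hector_le: "hector X DX k W q \<Longrightarrow> diffeology (TXset X DX) D \<Longrightarrow>
   (\<forall>(k', W', q') \<in> hector_gens DX. D k' W' q') \<Longrightarrow> D k W q"
  unfolding hector_def by blast

lemma hector_Dall: "diffeology X DX \<Longrightarrow> hector X DX k W q \<Longrightarrow> Dall X DX k W q"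
  using hector_le diffeology_Dall Dall_gens by metis

lemma is_vsd_TXH: assumes X: "diffeology X DX" shows "is_vsd (TXH X DX)"
  unfolding is_vsd_def TXH_def
  using hector_diff[OF X] X fibre_vs_TX[of X DX "hector X DX"] hector_Dall[OF X] fst_TXset[of X DX]
  by (auto simp: dsmooth_def Dall_def pull_def)

lemma dvs_alt: "dvs_dfg X DX = (\<lambda>k W q. \<forall>D. ((\<forall>k' W' q'. hector X DX k' W' q' \<longrightarrow> D k' W' q') \<and>
      is_dvs (TX_with X DX D)) \<longrightarrow> D k W q)"
  by (simp add: dvs_dfg_def fun_eq_iff)

lemma Dall_dvsP: "diffeology X DX \<Longrightarrow> (\<forall>k' W' q'. hector X DX k' W' q' \<longrightarrow> Dall X DX k' W' q') \<and>
      is_dvs (TX_with X DX (Dall X DX))"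
  using hector_Dall is_dvs_Dall by blast

lemma dvs_Dall: "diffeology X DX \<Longrightarrow> dvs_dfg X DX k W q \<Longrightarrow> Dall X DX k W q"
  using Dall_dvsP unfolding dvs_dfg_def by blast

lemma hector_dvs: "hector X DX k W q \<Longrightarrow> dvs_dfg X DX k W q"
  unfolding dvs_dfg_def by blast

lemma dvs_le: "dvs_dfg X DX k W q \<Longrightarrow> (\<forall>k' W' q'. hector X DX k' W' q' \<longrightarrow> D k' W' q') \<Longrightarrow>
      is_dvs (TX_with X DX D) \<Longrightarrow> D k W q"
  unfolding dvs_dfg_def by blast

lemma is_dvs_TXdvs: assumes X: "diffeology X DX" shows "is_dvs (TXdvs X DX)"
proof -
  let ?P = "\<lambda>D. (\<forall>k' W' q'. hector X DX k' W' q' \<longrightarrow> D k' W' q') \<and> is_dvs (TX_with X DX D)"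
  have dd: "diffeology (TXset X DX) (dvs_dfg X DX)"
    unfolding dvs_alt
    by (rule diffeology_Inf[of _ _ "Dall X DX"]) (use Dall_dvsP[OF X] in \<open>auto simp: is_dvs_def is_vsd_def\<close>)
  have P: "?P D \<Longrightarrow> is_dvs (TX_with X DX D)" for D by blast
  show ?thesis unfolding is_dvs_def is_vsd_def TXdvs_def
  proof (intro conjI allI impI)
    show "diffeology (vs_tot (TX_with X DX (dvs_dfg X DX))) (vs_totD (TX_with X DX (dvs_dfg X DX)))"
      using dd by simp
    show "diffeology (vs_bas (TX_with X DX (dvs_dfg X DX))) (vs_basD (TX_with X DX (dvs_dfg X DX)))"
      using X by simp
    show "dsmooth (vs_tot (TX_with X DX (dvs_dfg X DX))) (vs_totD (TX_with X DX (dvs_dfg X DX)))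
     (vs_bas (TX_with X DX (dvs_dfg X DX))) (vs_basD (TX_with X DX (dvs_dfg X DX))) (vs_prj (TX_with X DX (dvs_dfg X DX)))"
      using fst_TXset[of X DX] dvs_Dall[OF X] by (auto simp: dsmooth_def Dall_def pull_def)
    show "fibre_vs (TX_with X DX (dvs_dfg X DX))" by (rule fibre_vs_TX)
    fix n U
    show "vs_totD (TX_with X DX (dvs_dfg X DX)) n U (\<lambda>u. vs_add (TX_with X DX (dvs_dfg X DX)) (a u) (b u))"
      if ab: "vs_totD (TX_with X DX (dvs_dfg X DX)) n U a \<and> vs_totD (TX_with X DX (dvs_dfg X DX)) n U b \<and>
        (\<forall>u\<in>U. vs_prj (TX_with X DX (dvs_dfg X DX)) (a u) = vs_prj (TX_with X DX (dvs_dfg X DX)) (b u))" for a b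
    proof -
      have "D n U (\<lambda>u. tx_add DX (a u) (b u))" if PD: "?P D" for D
      proof -
        have a: "dvs_dfg X DX n U a" "dvs_dfg X DX n U b" using ab by simp_all
        have "D n U a" "D n U b" using dvs_le[OF a(1) conjunct1[OF PD] conjunct2[OF PD]]
            dvs_le[OF a(2) conjunct1[OF PD] conjunct2[OF PD]] by simp_all
        then show ?thesis using P[OF PD] \<open>vs_totD _ n U a \<and> _\<close> unfolding is_dvs_def by simp
      qed
      then show ?thesis unfolding dvs_dfg_def TX_with_simps by blast
    qed
    show "vs_totD (TX_with X DX (dvs_dfg X DX)) n U (\<lambda>u. vs_smul (TX_with X DX (dvs_dfg X DX)) (r u) (a u))"
      if ra: "open_Rn n U \<and> smooth_real n U r \<and> vs_totD (TX_with X DX (dvs_dfg X DX)) n U a" for r a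
    proof -
      have "D n U (\<lambda>u. tx_smul DX (r u) (a u))" if PD: "?P D" for D
      proof -
        have a: "dvs_dfg X DX n U a" using ra by simp_all
        have "D n U a" using dvs_le[OF a(1) conjunct1[OF PD] conjunct2[OF PD]] by simp
        then show ?thesis using P[OF PD] \<open>open_Rn n U \<and> _\<close> unfolding is_dvs_def by simp
      qed
      then show ?thesis unfolding dvs_dfg_def TX_with_simps by blast
    qed
    show "vs_totD (TX_with X DX (dvs_dfg X DX)) n U (\<lambda>u. vs_zero (TX_with X DX (dvs_dfg X DX)) (q u))"
      if "vs_basD (TX_with X DX (dvs_dfg X DX)) n U q" for q
    proof -
      have "D n U (\<lambda>u. tx_zero DX (q u))" if PD: "?P D" for D
        using P[OF PD] \<open>vs_basD _ n U q\<close> unfolding is_dvs_def by simp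
      then show ?thesis unfolding dvs_dfg_def TX_with_simps by blast
    qed
  qed
qed



lemma smooth_map_cont:
  assumes "smooth_map n U m V f"
  shows "continuous_on U f"
proof (rule continuous_on_coordinatewise_then_product)
  fix j
  show "continuous_on U (\<lambda>x. f x j)"
  proof (cases "j < m")
    case True
    then have "Ck n 0 U (\<lambda>x. f x j)" using assms unfolding smooth_map_def smooth_real_def by blast
    then show ?thesis by simp
  next
    case False
    have "\<forall>x\<in>U. f x j = 0" using assms False by (auto simp: smooth_map_def Rn_def)
    then show ?thesis using continuous_on_cong[of U U "\<lambda>x. f x j" "\<lambda>x. 0"] continuous_on_const by simp
  qed
qed

lemma comp_map:
  assumes f: "smooth_map n U m V f" and u: "u \<in> U"
  shows "f ` connected_component_set U u \<subseteq> connected_component_set V (f u)"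
proof (rule connected_component_maximal)
  show "f u \<in> f ` connected_component_set U u" using u by simp
  show "connected (f ` connected_component_set U u)"
    by (rule connected_continuous_image)
       (auto intro: continuous_on_subset[OF smooth_map_cont[OF f] connected_component_subset])
  show "f ` connected_component_set U u \<subseteq> V"
    using smooth_map_img[OF f] connected_component_subset by blast
qed

lemma inj_sadd: "Defs.inj J (\<lambda>i. a i + b i) = sadd (Defs.inj J a) (Defs.inj J b)"
  by (auto simp: inj_apply sadd_def fun_eq_iff)
lemma inj_ssm: "Defs.inj J (\<lambda>i. r * a i) = ssm r (Defs.inj J a)"
  by (auto simp: inj_apply ssm_def fun_eq_iff)

lemma Tleg_compat:
  assumes X: "diffeology X DX" and p: "DX n U p" and q: "DX m V q"
    and f: "f \<in> dsx_mor (n, U, p) (m, V, q)" and u: "u \<in> U" and v: "v \<in> Rn n"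
  shows "Tleg DX (m, V, q) (Tmap n m f (u, v)) = Tleg DX (n, U, p) (u, v)"
proof -
  have fs: "smooth_map n U m V f" and fq: "\<And>w. w \<in> U \<Longrightarrow> q (f w) = p w"
    using f by (auto simp: dsx_mor_def)
  have fuV: "f u \<in> V" using smooth_map_img[OF fs] u by auto
  let ?J = "Jpl (n, U, p) u" and ?J' = "Jpl (m, V, q) (f u)"
  define C where "C = connected_component_set U u"
  define C' where "C' = connected_component_set V (f u)"
  define F where "F = (\<lambda>w. subp (f (addp w u)) (f u))"
  have CU: "C \<subseteq> U" unfolding C_def by (rule connected_component_subset)
  have fC: "f ` C \<subseteq> C'" unfolding C_def C'_def by (rule comp_map[OF fs u])
  have J: "?J \<in> Jx DX (p u)" by (rule Jpl_props(4)[OF X p u])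
  have J': "?J' \<in> Jx DX (p u)" using Jpl_props(4)[OF X q fuV] fq[OF u] by simp
  have domJ: "fst (snd ?J) = (\<lambda>w. subp w u) ` C" and domJ': "fst (snd ?J') = (\<lambda>w. subp w (f u)) ` C'"
    by (simp_all add: Jpl_def C_def C'_def)
  have F: "F \<in> Jmor ?J ?J'"
  proof -
    have "smooth_map n ((\<lambda>w. subp w u) ` C) m ((\<lambda>w. subp w (f u)) ` C') F"
      unfolding F_def
    proof (rule smooth_map_shiftf[OF fs _ u])
      fix w assume "w \<in> (\<lambda>w. subp w u) ` C"
      then have w: "addp w u \<in> C" by (simp add: img_subp_iff)
      then show "addp w u \<in> U \<and> subp (f (addp w u)) (f u) \<in> (\<lambda>w. subp w (f u)) ` C'"
        using CU fC by (auto simp: img_subp_iff addp_subp)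
    qed
    moreover have "F zv = zv" by (simp add: F_def addp_zv subp_self)
    moreover have "q (addp (F w) (f u)) = p (addp w u)" if "w \<in> (\<lambda>w. subp w u) ` C" for w
      using that CU fq by (auto simp: F_def addp_subp img_subp_iff)
    ultimately show ?thesis by (simp add: Jmor_def Jpl_def C_def C'_def)
  qed
  have vJ: "v \<in> Rn (fst ?J)" using v by (simp add: Jpl_def)
  have "(\<lambda>k i. Defs.inj ?J' (Dm (fst ?J) (fst ?J') F zv v) k i - Defs.inj ?J v k i) \<in> Nsp DX (p u)"
    by (rule Ngen[OF J J' F vJ])
  moreover have "Dm (fst ?J) (fst ?J') F zv v = Dm n m f u v"
    by (simp add: Jpl_def F_def Dm_shiftf)
  ultimately have N: "ssub (Defs.inj ?J' (Dm n m f u v)) (Defs.inj ?J v) \<in> Nsp DX (p u)"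
    by (simp add: ssub_def)
  show ?thesis
    using cls_eq[OF N] fq[OF u] by (simp add: Tleg_eq Tmap_def)
qed

lemma cocone_TX:
  assumes X: "diffeology X DX" and G: "\<And>k W q. (k, W, q) \<in> hector_gens DX \<Longrightarrow> D k W q"
  shows "cocone DX (TX_with X DX D) (Tleg DX) Pleg"
  unfolding cocone_def
proof (intro conjI)
  show "\<forall>j\<in>plots DX. vsd_hom (TUobj j) (TX_with X DX D) (Tleg DX j) (Pleg j)"
  proof
  fix j assume "j \<in> plots DX"
  then obtain n U p where j: "j = (n, U, p)" and p: "DX n U p" by (auto simp: plots_def)
  have pX: "p ` U \<subseteq> X" using diffeologyD(1)[OF X p] by blast
  show "vsd_hom (TUobj j) (TX_with X DX D) (Tleg DX j) (Pleg j)"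
    unfolding vsd_hom_def j
  proof (intro conjI ballI allI)
    show "dsmooth (vs_tot (TUobj (n, U, p))) (vs_totD (TUobj (n, U, p))) (vs_tot (TX_with X DX D))
       (vs_totD (TX_with X DX D)) (Tleg DX (n, U, p))"
      unfolding dsmooth_def
    proof (intro conjI allI impI)
      show "Tleg DX (n, U, p) ` vs_tot (TUobj (n, U, p)) \<subseteq> vs_tot (TX_with X DX D)"
        using Tleg_mem[OF X p] by (auto simp del: TUobj_simps simp: TUobj_simps(1))
      fix k W g assume "vs_totD (TUobj (n, U, p)) k W g"
      then have "(k, W, Tleg DX (n, U, p) \<circ> g) \<in> hector_gens DX"
        unfolding hector_gens_def using p by (auto simp: plots_def)
      then show "vs_totD (TX_with X DX D) k W (Tleg DX (n, U, p) \<circ> g)" using G by simp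
    qed
    show "dsmooth (vs_bas (TUobj (n, U, p))) (vs_basD (TUobj (n, U, p))) (vs_bas (TX_with X DX D))
       (vs_basD (TX_with X DX D)) (Pleg (n, U, p))"
      using pX diffeologyD(3)[OF X p] by (auto simp: dsmooth_def Pleg_def std_dfg_def simp del: o_apply)
    show "vs_prj (TX_with X DX D) (Tleg DX (n, U, p) v) = Pleg (n, U, p) (vs_prj (TUobj (n, U, p)) v)"
      for v by (simp add: Tleg_fst Pleg_def)
    fix x assume x: "x \<in> vs_bas (TUobj (n, U, p))"
    then have xU: "x \<in> U" by simp
    have J: "Jpl (n, U, p) x \<in> Jx DX (p x)" by (rule Jpl_props(4)[OF X p xU])
    have fibU: "z \<in> fib (TUobj (n, U, p)) x \<longleftrightarrow> fst z = x \<and> snd z \<in> Rn n" for z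
      using xU by (auto simp: fib_def)
    show "Tleg DX (n, U, p) (vs_add (TUobj (n, U, p)) v w) =
          vs_add (TX_with X DX D) (Tleg DX (n, U, p) v) (Tleg DX (n, U, p) w)"
      if "v \<in> fib (TUobj (n, U, p)) x" "w \<in> fib (TUobj (n, U, p)) x" for v w
    proof -
      have v: "fst v = x" "snd v \<in> Rn n" and w: "fst w = x" "snd w \<in> Rn n" using that fibU by auto
      have "Defs.inj (Jpl (n, U, p) x) (snd v) \<in> FS DX (p x)" "Defs.inj (Jpl (n, U, p) x) (snd w) \<in> FS DX (p x)"
        using FS_inj[OF J] v w by (auto simp: Jpl_def)
      then show ?thesis using v w by (simp add: Tleg_eq tx_add_cls inj_sadd)
    qed
    show "Tleg DX (n, U, p) (vs_smul (TUobj (n, U, p)) a v) = vs_smul (TX_with X DX D) a (Tleg DX (n, U, p) v)"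
      if "v \<in> fib (TUobj (n, U, p)) x" for a v
    proof -
      have v: "fst v = x" "snd v \<in> Rn n" using that fibU by auto
      have "Defs.inj (Jpl (n, U, p) x) (snd v) \<in> FS DX (p x)"
        using FS_inj[OF J] v by (auto simp: Jpl_def)
      then show ?thesis using v by (simp add: Tleg_eq tx_smul_cls inj_ssm)
    qed
  qed
  qed
next
  show "\<forall>j\<in>plots DX. \<forall>j'\<in>plots DX. \<forall>f\<in>dsx_mor j j'.
        (\<forall>z\<in>vs_tot (TUobj j). Tleg DX j' (Tmap (fst j) (fst j') f z) = Tleg DX j z) \<and>
        (\<forall>u\<in>fst (snd j). Pleg j' (f u) = Pleg j u)"
  proof (intro ballI)
  fix j j' f assume "j \<in> plots DX" "j' \<in> plots DX" "f \<in> dsx_mor j j'"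
  then obtain n U p m V q where j: "j = (n, U, p)" "j' = (m, V, q)" and p: "DX n U p" and q: "DX m V q"
    and f: "f \<in> dsx_mor (n, U, p) (m, V, q)" by (auto simp: plots_def)
  show "(\<forall>z\<in>vs_tot (TUobj j). Tleg DX j' (Tmap (fst j) (fst j') f z) = Tleg DX j z) \<and>
        (\<forall>u\<in>fst (snd j). Pleg j' (f u) = Pleg j u)"
  proof (intro conjI ballI)
    fix z assume "z \<in> vs_tot (TUobj j)"
    then have "fst z \<in> U" "snd z \<in> Rn n" using j by auto
    then show "Tleg DX j' (Tmap (fst j) (fst j') f z) = Tleg DX j z"
      using Tleg_compat[OF X p q f, of "fst z" "snd z"] j by simp
  next
    fix u assume "u \<in> fst (snd j)"
    then show "Pleg j' (f u) = Pleg j u" using f j by (simp add: Pleg_def dsx_mor_def)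
  qed
  qed
qed



lemma fvs_W:
  assumes "fibre_vs W" "y \<in> vs_bas W"
  shows "fvs (fib W y) (vs_add W) (vs_smul W) (vs_zero W y)"
proof -
  note c = bspec[OF assms(1)[unfolded fibre_vs_def] assms(2)]
  show ?thesis
    unfolding fvs_def
    apply (intro conjI allI impI)
    apply (insert c)
    apply (elim conjE; (blast | metis))+
    done
qed

definition cst :: "'a \<Rightarrow> 'a plot" where "cst x = (0, {zv}, \<lambda>_. x)"

lemma Jmor_sub: "f \<in> Jmor j j' \<Longrightarrow> f \<in> dsx_mor j j'"
  by (cases j; cases j') (auto simp: Jmor_def dsx_mor_def)

lemma Jx_D: "(n, U, p) \<in> Jx DX x \<Longrightarrow> DX n U p \<and> zv \<in> U \<and> p zv = x \<and> connected U"
  by (simp add: Jx_def)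

lemma Jx_plots: "j \<in> Jx DX x \<Longrightarrow> j \<in> plots DX"
  by (cases j) (auto simp: Jx_def plots_def)

locale med =
  fixes X :: "'a set" and DX :: "'a dfg" and W :: "('w, 'y, 'd) vsd_scheme"
    and G :: "'a plot \<Rightarrow> pt \<times> pt \<Rightarrow> 'w" and H :: "'a plot \<Rightarrow> pt \<Rightarrow> 'y"
  assumes X: "diffeology X DX" and W: "is_vsd W" and C: "cocone DX W G H"
begin

definition hh :: "'a \<Rightarrow> 'y" where "hh x = H (cst x) zv"

definition MM :: "'a \<Rightarrow> 'w monoid" where "MM x = Mon (fib W (hh x)) (vs_add W) (vs_zero W (hh x))"

definition L :: "'a \<Rightarrow> ('a plot \<Rightarrow> pt) \<Rightarrow> 'w" where
  "L x s = finprod (MM x) (\<lambda>j. G j (zv, s j)) {j. s j \<noteq> zv}"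

definition gg :: "'a tx \<Rightarrow> 'w" where "gg v = L (fst v) (rep (snd v))"

lemma hom: "j \<in> plots DX \<Longrightarrow> vsd_hom (TUobj j) W (G j) (H j)"
  using C by (simp add: cocone_def)

lemma compat: "j \<in> plots DX \<Longrightarrow> j' \<in> plots DX \<Longrightarrow> f \<in> dsx_mor j j' \<Longrightarrow>
   z \<in> vs_tot (TUobj j) \<Longrightarrow> G j' (Tmap (fst j) (fst j') f z) = G j z"
  using C unfolding cocone_def by blast

lemma compatH: "j \<in> plots DX \<Longrightarrow> j' \<in> plots DX \<Longrightarrow> f \<in> dsx_mor j j' \<Longrightarrow>
   u \<in> fst (snd j) \<Longrightarrow> H j' (f u) = H j u"
  using C unfolding cocone_def by blast

lemma cst_plot: "x \<in> X \<Longrightarrow> cst x \<in> plots DX"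
  using diffeologyD(2)[OF X open_Rn0] by (simp add: cst_def plots_def)

lemma cst_Jx: "x \<in> X \<Longrightarrow> cst x \<in> Jx DX x"
  using diffeologyD(2)[OF X open_Rn0] by (simp add: cst_def Jx_def)

lemma Wfib: "fibre_vs W" using W by (simp add: is_vsd_def)

lemma Wdiff: "diffeology (vs_tot W) (vs_totD W)" "diffeology (vs_bas W) (vs_basD W)"
  using W by (simp_all add: is_vsd_def)

lemma Hconst:
  assumes p: "DX n U p" and u: "u \<in> U"
  shows "H (n, U, p) u = hh (p u)"
proof -
  have puX: "p u \<in> X" using diffeologyD(1)[OF X p] u by blast
  have URn: "U \<subseteq> Rn n" using diffeologyD(1)[OF X p] open_Rn_sub by blast
  have "(\<lambda>_. u) \<in> dsx_mor (cst (p u)) (n, U, p)"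
    using smooth_map_const[OF u URn] by (simp add: dsx_mor_def cst_def)
  then show ?thesis
    using compatH[OF cst_plot[OF puX], of "(n, U, p)" "\<lambda>_. u" zv] p
    by (simp add: plots_def cst_def hh_def)
qed

lemma hh_bas: "x \<in> X \<Longrightarrow> hh x \<in> vs_bas W"
  using hom[OF cst_plot] unfolding vsd_hom_def dsmooth_def hh_def by (auto simp: cst_def)

lemma Gfib:
  assumes p: "DX n U p" and u: "u \<in> U" and v: "v \<in> Rn n"
  shows "G (n, U, p) (u, v) \<in> fib W (hh (p u))"
proof -
  have hm: "vsd_hom (TUobj (n, U, p)) W (G (n, U, p)) (H (n, U, p))" using hom p by (simp add: plots_def)
  have "G (n, U, p) (u, v) \<in> vs_tot W" using hm u v unfolding vsd_hom_def dsmooth_def by auto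
  moreover have "vs_prj W (G (n, U, p) (u, v)) = H (n, U, p) u" using hm u v unfolding vsd_hom_def by auto
  ultimately show ?thesis using Hconst[OF p u] by (simp add: fib_def)
qed

lemma Glin:
  assumes j: "j \<in> Jx DX x" and a: "a \<in> Rn (fst j)" and b: "b \<in> Rn (fst j)"
  shows "G j (zv, \<lambda>i. a i + b i) = vs_add W (G j (zv, a)) (G j (zv, b))"
    "G j (zv, \<lambda>i. r * a i) = vs_smul W r (G j (zv, a))"
proof -
  obtain n U p where jj: "j = (n, U, p)" by (cases j)
  have hm: "vsd_hom (TUobj j) W (G j) (H j)" using hom Jx_plots[OF j] by simp
  have zU: "zv \<in> U" using j jj by (simp add: Jx_def)
  have fa: "(zv, a) \<in> fib (TUobj j) zv" "(zv, b) \<in> fib (TUobj j) zv" using a b zU jj by (auto simp: fib_def)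
  have zb: "zv \<in> vs_bas (TUobj j)" using zU jj by simp
  have l1: "\<forall>x\<in>vs_bas (TUobj j). \<forall>v\<in>fib (TUobj j) x. \<forall>w\<in>fib (TUobj j) x.
     G j (vs_add (TUobj j) v w) = vs_add W (G j v) (G j w)"
    and l2: "\<forall>x\<in>vs_bas (TUobj j). \<forall>a. \<forall>v\<in>fib (TUobj j) x. G j (vs_smul (TUobj j) a v) = vs_smul W a (G j v)"
    using hm unfolding vsd_hom_def by blast+
  show "G j (zv, \<lambda>i. a i + b i) = vs_add W (G j (zv, a)) (G j (zv, b))"
    using l1[rule_format, OF zb fa(1) fa(2)] jj by simp
  show "G j (zv, \<lambda>i. r * a i) = vs_smul W r (G j (zv, a))"
    using l2[rule_format, OF zb fa(1), of r] jj by simp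
qed

lemma Gx: assumes j: "j \<in> Jx DX x" and v: "v \<in> Rn (fst j)"
  shows "G j (zv, v) \<in> fib W (hh x)"
proof -
  obtain n U p where jj: "j = (n, U, p)" by (cases j)
  then show ?thesis using Gfib[of n U p zv v] Jx_D[of n U p DX x] j v by simp
qed

lemma xfvs: "x \<in> X \<Longrightarrow> fvs (fib W (hh x)) (vs_add W) (vs_smul W) (vs_zero W (hh x))"
  by (rule fvs_W[OF Wfib hh_bas])

lemma Gzero: assumes j: "j \<in> Jx DX x" and x: "x \<in> X" shows "G j (zv, zv) = vs_zero W (hh x)"
proof -
  have "G j (zv, \<lambda>i. 0 * zv i) = vs_smul W 0 (G j (zv, zv))" by (rule Glin(2)[OF j zv_Rn zv_Rn])
  moreover have "(\<lambda>i. 0 * zv i) = zv" by (simp add: zv_def)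
  ultimately show ?thesis using fvs.sm0[OF xfvs[OF x] Gx[OF j zv_Rn]] by simp
qed

lemma Gpi: assumes "s \<in> FS DX x" "A \<subseteq> Jx DX x"
  shows "(\<lambda>j. G j (zv, s j)) \<in> A \<rightarrow> fib W (hh x)"
  using Gx FS_val[OF assms(1)] assms(2) by blast

lemma cmM: "x \<in> X \<Longrightarrow> comm_monoid (MM x)"
  unfolding MM_def by (rule fvs.comm_monoid_M[OF xfvs])

lemma L_sup:
  assumes x: "x \<in> X" and s: "s \<in> FS DX x" and A: "finite A" "{j. s j \<noteq> zv} \<subseteq> A" "A \<subseteq> Jx DX x"
  shows "L x s = finprod (MM x) (\<lambda>j. G j (zv, s j)) A"
  unfolding L_def
proof (rule comm_monoid.finprod_mono_neutral_cong_left[OF cmM[OF x] A(1,2)])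
  show "\<And>i. i \<in> A - {j. s j \<noteq> zv} \<Longrightarrow> G i (zv, s i) = \<one>\<^bsub>MM x\<^esub>"
    using Gzero A(3) x by (auto simp: MM_def)
  show "(\<lambda>j. G j (zv, s j)) \<in> A \<rightarrow> carrier (MM x)" using Gpi[OF s A(3)] by (simp add: MM_def)
qed simp

lemma L_mem: assumes x: "x \<in> X" and s: "s \<in> FS DX x" shows "L x s \<in> fib W (hh x)"
  unfolding L_def MM_def
  by (rule fvs.fp_closed[OF xfvs[OF x]]) (rule Gpi[OF s], use FS_supp[OF s] in blast)

lemma L_add:
  assumes x: "x \<in> X" and s: "s \<in> FS DX x" and t: "t \<in> FS DX x"
  shows "L x (sadd s t) = vs_add W (L x s) (L x t)"
proof -
  define A where "A = {j. s j \<noteq> zv} \<union> {j. t j \<noteq> zv}"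
  have fA: "finite A" using FS_fin[OF s] FS_fin[OF t] by (simp add: A_def)
  have AJ: "A \<subseteq> Jx DX x" using FS_supp[OF s] FS_supp[OF t] by (auto simp: A_def)
  have st: "sadd s t \<in> FS DX x" by (rule FS_sadd[OF s t])
  have "L x (sadd s t) = finprod (MM x) (\<lambda>j. G j (zv, sadd s t j)) A"
    by (rule L_sup[OF x st fA _ AJ]) (use sadd_zv[of s t] in \<open>auto simp: A_def\<close>)
  also have "\<dots> = finprod (MM x) (\<lambda>j. vs_add W (G j (zv, s j)) (G j (zv, t j))) A"
  proof (rule comm_monoid.finprod_cong'[OF cmM[OF x] refl])
    show "\<And>i. i \<in> A \<Longrightarrow> G i (zv, sadd s t i) = vs_add W (G i (zv, s i)) (G i (zv, t i))"
      using Glin(1) AJ FS_val[OF s] FS_val[OF t] by (auto simp: sadd_def)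
    show "(\<lambda>i. vs_add W (G i (zv, s i)) (G i (zv, t i))) \<in> A \<rightarrow> carrier (MM x)"
      using Gpi[OF s AJ] Gpi[OF t AJ] fvs.add_in[OF xfvs[OF x]] by (auto simp: MM_def)
  qed
  also have "\<dots> = vs_add W (finprod (MM x) (\<lambda>j. G j (zv, s j)) A) (finprod (MM x) (\<lambda>j. G j (zv, t j)) A)"
    using comm_monoid.finprod_multf[OF cmM[OF x], of "\<lambda>j. G j (zv, s j)" A "\<lambda>j. G j (zv, t j)"]
      Gpi[OF s AJ] Gpi[OF t AJ] by (simp add: MM_def)
  also have "\<dots> = vs_add W (L x s) (L x t)"
    using L_sup[OF x s fA _ AJ] L_sup[OF x t fA _ AJ] by (simp add: A_def)
  finally show ?thesis .
qed

lemma L_smul: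
  assumes x: "x \<in> X" and s: "s \<in> FS DX x"
  shows "L x (ssm r s) = vs_smul W r (L x s)"
proof -
  define A where "A = {j. s j \<noteq> zv}"
  have fA: "finite A" using FS_fin[OF s] by (simp add: A_def)
  have AJ: "A \<subseteq> Jx DX x" using FS_supp[OF s] by (auto simp: A_def)
  have st: "ssm r s \<in> FS DX x" by (rule FS_ssm[OF s])
  have "L x (ssm r s) = finprod (MM x) (\<lambda>j. G j (zv, ssm r s j)) A"
    by (rule L_sup[OF x st fA _ AJ]) (auto simp: A_def ssm_def zv_def)
  also have "\<dots> = finprod (MM x) (\<lambda>j. vs_smul W r (G j (zv, s j))) A"
  proof (rule comm_monoid.finprod_cong'[OF cmM[OF x] refl])
    show "G i (zv, ssm r s i) = vs_smul W r (G i (zv, s i))" if "i \<in> A" for i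
      using Glin(2)[OF subsetD[OF AJ that] FS_val[OF s] zv_Rn] by (simp add: ssm_def)
    show "(\<lambda>i. vs_smul W r (G i (zv, s i))) \<in> A \<rightarrow> carrier (MM x)"
      using Gpi[OF s AJ] fvs.sm_in[OF xfvs[OF x]] by (auto simp: MM_def)
  qed
  also have "\<dots> = vs_smul W r (finprod (MM x) (\<lambda>j. G j (zv, s j)) A)"
    using fvs.sm_finprod[OF xfvs[OF x] fA Gpi[OF s AJ]] by (simp add: MM_def)
  also have "\<dots> = vs_smul W r (L x s)" by (simp add: L_def A_def)
  finally show ?thesis .
qed

lemma L_inj:
  assumes x: "x \<in> X" and j: "j \<in> Jx DX x" and v: "v \<in> Rn (fst j)"
  shows "L x (Defs.inj j v) = G j (zv, v)"
proof -
  have s: "Defs.inj j v \<in> FS DX x" by (rule FS_inj[OF j v])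
  have "L x (Defs.inj j v) = finprod (MM x) (\<lambda>k. G k (zv, Defs.inj j v k)) {j}"
    by (rule L_sup[OF x s]) (use j in \<open>auto simp: inj_apply\<close>)
  also have "\<dots> = vs_add W (G j (zv, v)) (vs_zero W (hh x))"
    using comm_monoid.finprod_insert[OF cmM[OF x], of "{}" j "\<lambda>k. G k (zv, Defs.inj j v k)"]
      Gx[OF j v] comm_monoid.finprod_empty[OF cmM[OF x], of "\<lambda>k. G k (zv, Defs.inj j v k)"]
    by (simp add: MM_def inj_apply)
  also have "\<dots> = G j (zv, v)" using fvs.zr[OF xfvs[OF x] Gx[OF j v]] .
  finally show ?thesis .
qed

lemma L_0: assumes x: "x \<in> X" shows "L x (\<lambda>k i. 0) = vs_zero W (hh x)"
proof -
  have e: "(\<lambda>i. 0::real) = zv" by (simp add: zv_def)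
  show ?thesis unfolding L_def e using comm_monoid.finprod_empty[OF cmM[OF x]] by (simp add: MM_def)
qed

lemma L_N: assumes x: "x \<in> X" shows "a \<in> Nsp DX x \<Longrightarrow> L x a = vs_zero W (hh x)"
proof (induction rule: Nsp.induct)
  case N0 then show ?case by (rule L_0[OF x])
next
  case (Ngen j j' f v)
  let ?w = "Dm (fst j) (fst j') f zv v"
  have e: "(\<lambda>k i. Defs.inj j' ?w k i - Defs.inj j v k i) = sadd (Defs.inj j' ?w) (ssm (-1) (Defs.inj j v))"
    by (auto simp: sadd_def ssm_def fun_eq_iff)
  have w: "?w \<in> Rn (fst j')" by (rule Dm_Rn)
  have s1: "Defs.inj j' ?w \<in> FS DX x" by (rule FS_inj[OF Ngen(2) w])
  have s2: "Defs.inj j v \<in> FS DX x" by (rule FS_inj[OF Ngen(1) Ngen(4)])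
  have "G j' (Tmap (fst j) (fst j') f (zv, v)) = G j (zv, v)"
  proof (rule compat[OF Jx_plots[OF Ngen(1)] Jx_plots[OF Ngen(2)] Jmor_sub[OF Ngen(3)]])
    show "(zv, v) \<in> vs_tot (TUobj j)" using Ngen(1,4) by (cases j) (auto simp: Jx_def)
  qed
  moreover have "Tmap (fst j) (fst j') f (zv, v) = (zv, ?w)"
    using Ngen(3) by (cases j; cases j') (auto simp: Tmap_def Jmor_def)
  ultimately have gg: "G j' (zv, ?w) = G j (zv, v)" by simp
  have "L x (sadd (Defs.inj j' ?w) (ssm (-1) (Defs.inj j v))) =
        vs_add W (G j (zv, v)) (vs_smul W (-1) (G j (zv, v)))"
    using L_add[OF x s1 FS_ssm[OF s2]] L_smul[OF x s2] L_inj[OF x Ngen(2) w] L_inj[OF x Ngen(1) Ngen(4)] gg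
    by simp
  also have "\<dots> = vs_zero W (hh x)" by (rule fvs.add_neg[OF xfvs[OF x] Gx[OF Ngen(1,4)]])
  finally show ?case using e by simp
next
  case (Nadd a b)
  have "L x (sadd a b) = vs_zero W (hh x)"
    using L_add[OF x Nsp_FS[OF Nadd(1)] Nsp_FS[OF Nadd(2)]] Nadd(3,4)
      fvs.zr[OF xfvs[OF x] fvs.z_in[OF xfvs[OF x]]] by simp
  then show ?case by (simp add: sadd_def)
next
  case (Nsmul a r)
  have "L x (ssm r a) = vs_zero W (hh x)"
    using L_smul[OF x Nsp_FS[OF Nsmul(1)]] Nsmul(2) fvs.smz[OF xfvs[OF x]] by simp
  then show ?case by (simp add: ssm_def)
qed

lemma L_cls:
  assumes x: "x \<in> X" and s: "s \<in> FS DX x" and t: "t \<in> FS DX x" and N: "ssub s t \<in> Nsp DX x"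
  shows "L x s = L x t"
proof -
  have "s = sadd t (ssub s t)" by (auto simp: sadd_def ssub_def fun_eq_iff)
  then have "L x s = vs_add W (L x t) (L x (ssub s t))"
    using L_add[OF x t FS_ssub[OF s t]] by metis
  then show ?thesis using L_N[OF x N] fvs.zr[OF xfvs[OF x] L_mem[OF x t]] by simp
qed

lemma gg_cls: assumes x: "x \<in> X" and s: "s \<in> FS DX x" shows "gg (x, cls DX x s) = L x s"
  unfolding gg_def using L_cls[OF x rep_cls(1)[OF s] s rep_cls(2)[OF s]] by simp

end



context med begin

lemma gg_Tleg:
  assumes p: "DX n U p" and u: "u \<in> U" and v: "v \<in> Rn n"
  shows "gg (Tleg DX (n, U, p) (u, v)) = G (n, U, p) (u, v)"
proof -
  let ?J = "Jpl (n, U, p) u"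
  have puX: "p u \<in> X" using diffeologyD(1)[OF X p] u by blast
  have J: "?J \<in> Jx DX (p u)" by (rule Jpl_props(4)[OF X p u])
  have vJ: "v \<in> Rn (fst ?J)" using v by (simp add: Jpl_def)
  have "gg (Tleg DX (n, U, p) (u, v)) = L (p u) (Defs.inj ?J v)"
    using gg_cls[OF puX FS_inj[OF J vJ]] by (simp add: Tleg_eq)
  also have "\<dots> = G ?J (zv, v)" by (rule L_inj[OF puX J vJ])
  also have "\<dots> = G (n, U, p) (Tmap (fst ?J) (fst (n, U, p)) (\<lambda>w. addp w u) (zv, v))"
  proof (rule compat[symmetric, OF Jpl_props(6)[OF X p u] _ Jpl_props(5)[OF X p u]])
    show "(n, U, p) \<in> plots DX" using p by (simp add: plots_def)
    have "zv \<in> fst (snd ?J)" using J by (cases ?J) (simp add: Jx_def)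
    then show "(zv, v) \<in> vs_tot (TUobj ?J)" using v by (simp add: Jpl_def)
  qed
  also have "\<dots> = G (n, U, p) (u, v)"
    using Dm_transl[OF v, of u zv] by (simp add: Tmap_def Jpl_def addp_zv)
  finally show ?thesis .
qed

lemma gg_mem: assumes "v \<in> TXset X DX" shows "gg v \<in> fib W (hh (fst v))"
proof -
  obtain s where "fst v \<in> X" "s \<in> FS DX (fst v)" "snd v = cls DX (fst v) s" using assms TXset_iff by blast
  then show ?thesis using gg_cls L_mem by (metis prod.collapse)
qed

lemma gg_lin:
  assumes x: "x \<in> X" and a: "a \<in> fib (TX_with X DX D) x" and b: "b \<in> fib (TX_with X DX D) x"
  shows "gg (tx_add DX a b) = vs_add W (gg a) (gg b)" "gg (tx_smul DX r a) = vs_smul W r (gg a)"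
proof -
  obtain s t where s: "s \<in> FS DX x" "a = (x, cls DX x s)" and t: "t \<in> FS DX x" "b = (x, cls DX x t)"
    using a b fib_TX[OF x] by metis
  show "gg (tx_add DX a b) = vs_add W (gg a) (gg b)"
    using s t by (simp add: tx_add_cls gg_cls[OF x] FS_sadd L_add[OF x])
  show "gg (tx_smul DX r a) = vs_smul W r (gg a)"
    using s by (simp add: tx_smul_cls gg_cls[OF x] FS_ssm L_smul[OF x])
qed

lemma gg_zero: "x \<in> X \<Longrightarrow> gg (tx_zero DX x) = vs_zero W (hh x)"
  by (simp add: tx_zero_def gg_cls FS_0 L_0)

lemma hh_smooth: "dsmooth X DX (vs_bas W) (vs_basD W) hh"
  unfolding dsmooth_def
proof (intro conjI allI impI)
  show "hh ` X \<subseteq> vs_bas W" using hh_bas by blast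
  fix n U q assume q: "DX n U q"
  have oU: "open_Rn n U" using diffeologyD(1)[OF X q] by blast
  have hm: "vsd_hom (TUobj (n, U, q)) W (G (n, U, q)) (H (n, U, q))" using hom q by (simp add: plots_def)
  have "std_dfg n U n U (\<lambda>x. x)" using oU smooth_map_id[OF open_Rn_sub[OF oU]] by (simp add: std_dfg_def)
  then have "vs_basD W n U (H (n, U, q) \<circ> (\<lambda>x. x))"
    using hm[unfolded vsd_hom_def dsmooth_def, THEN conjunct2, THEN conjunct1, THEN conjunct2, rule_format] by simp
  then show "vs_basD W n U (hh \<circ> q)"
    by (rule diffeologyD(5)[OF Wdiff(2)]) (simp add: Hconst[OF q])
qed

definition Dpp :: "'a tx dfg" where
  "Dpp = (\<lambda>k V q. Dall X DX k V q \<and> pull (TXset X DX) gg (vs_totD W) k V q)"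

lemma gg_img: "gg ` TXset X DX \<subseteq> vs_tot W"
  using gg_mem by (auto simp: fib_def)

lemma diffeology_Dpp: "diffeology (TXset X DX) Dpp"
  unfolding Dpp_def
  by (rule diffeology_inter[OF diffeology_Dall[OF X] diffeology_pull[OF Wdiff(1) gg_img]])

lemma gens_Dpp: assumes g: "(k, V, q) \<in> hector_gens DX" shows "Dpp k V q"
proof -
  have DA: "Dall X DX k V q" by (rule gens_Dall[OF X g])
  obtain n U p g' where a: "DX n U p" "q = Tleg DX (n, U, p) \<circ> g'" "open_Rn k V"
    "smooth_map k V n U (fst \<circ> g')" "smooth_map k V n (Rn n) (snd \<circ> g')"
    using gens_props[OF X g] by metis
  have hm: "vsd_hom (TUobj (n, U, p)) W (G (n, U, p)) (H (n, U, p))" using hom a(1) by (simp add: plots_def)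
  have "vs_totD (TUobj (n, U, p)) k V g'" using a by simp
  then have "vs_totD W k V (G (n, U, p) \<circ> g')"
    using hm[unfolded vsd_hom_def dsmooth_def, THEN conjunct1, THEN conjunct2, rule_format] by blast
  moreover have "\<forall>w\<in>V. (G (n, U, p) \<circ> g') w = (gg \<circ> q) w"
  proof
    fix w assume w: "w \<in> V"
    have "fst (g' w) \<in> U" "snd (g' w) \<in> Rn n" using smooth_map_img[OF a(4)] smooth_map_img[OF a(5)] w by auto
    then show "(G (n, U, p) \<circ> g') w = (gg \<circ> q) w"
      using gg_Tleg[OF a(1), of "fst (g' w)" "snd (g' w)"] a(2) by simp
  qed
  ultimately have "vs_totD W k V (gg \<circ> q)" by (rule diffeologyD(5)[OF Wdiff(1)])
  then show ?thesis using DA by (simp add: Dpp_def pull_def Dall_def)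
qed

lemma hector_Dpp: "hector X DX k V q \<Longrightarrow> Dpp k V q"
  by (rule hector_le[OF _ diffeology_Dpp]) (use gens_Dpp in auto)

lemma Dpp_Dall: "Dpp k V q \<Longrightarrow> Dall X DX k V q" by (simp add: Dpp_def)

lemma vsd_hom_gg:
  assumes D: "\<And>k V q. D k V q \<Longrightarrow> Dpp k V q"
  shows "vsd_hom (TX_with X DX D) W gg hh"
  unfolding vsd_hom_def
proof (intro conjI ballI allI)
  show "dsmooth (vs_tot (TX_with X DX D)) (vs_totD (TX_with X DX D)) (vs_tot W) (vs_totD W) gg"
    using gg_img D by (auto simp: dsmooth_def Dpp_def pull_def)
  show "dsmooth (vs_bas (TX_with X DX D)) (vs_basD (TX_with X DX D)) (vs_bas W) (vs_basD W) hh"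
    using hh_smooth by simp
  show "vs_prj W (gg v) = hh (vs_prj (TX_with X DX D) v)" if "v \<in> vs_tot (TX_with X DX D)" for v
    using gg_mem[of v] that by (simp add: fib_def)
  fix x assume "x \<in> vs_bas (TX_with X DX D)"
  then have x: "x \<in> X" by simp
  show "gg (vs_add (TX_with X DX D) v w) = vs_add W (gg v) (gg w)"
    if "v \<in> fib (TX_with X DX D) x" "w \<in> fib (TX_with X DX D) x" for v w
    using gg_lin(1)[OF x that] by simp
  show "gg (vs_smul (TX_with X DX D) a v) = vs_smul W a (gg v)"
    if "v \<in> fib (TX_with X DX D) x" for a v
    using gg_lin(2)[OF x that that] by simp
qed

lemma mediator_gg:
  assumes D: "\<And>k V q. D k V q \<Longrightarrow> Dpp k V q"
  shows "mediator DX (TX_with X DX D) W G H gg hh"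
  unfolding mediator_def
proof (intro conjI ballI)
  show "vsd_hom (TX_with X DX D) W gg hh" by (rule vsd_hom_gg[OF D])
  fix j assume "j \<in> plots DX"
  then obtain n U p where j: "j = (n, U, p)" and p: "DX n U p" by (auto simp: plots_def)
  show "gg (Tleg DX j z) = G j z" if "z \<in> vs_tot (TUobj j)" for z
    using that gg_Tleg[OF p, of "fst z" "snd z"] j by simp
  show "hh (Pleg j u) = H j u" if "u \<in> fst (snd j)" for u
    using that Hconst[OF p] j by (simp add: Pleg_def)
qed

lemma dvs_Dpp:
  assumes WD: "is_dvs W"
  shows "is_dvs (TX_with X DX Dpp)"
proof -
  note DA = is_dvs_Dall[OF X, unfolded is_dvs_def]
  note WW = WD[unfolded is_dvs_def]
  show ?thesis unfolding is_dvs_def is_vsd_def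
  proof (intro conjI allI impI)
    show "diffeology (vs_tot (TX_with X DX Dpp)) (vs_totD (TX_with X DX Dpp))"
      using diffeology_Dpp by simp
    show "diffeology (vs_bas (TX_with X DX Dpp)) (vs_basD (TX_with X DX Dpp))" using X by simp
    show "dsmooth (vs_tot (TX_with X DX Dpp)) (vs_totD (TX_with X DX Dpp))
     (vs_bas (TX_with X DX Dpp)) (vs_basD (TX_with X DX Dpp)) (vs_prj (TX_with X DX Dpp))"
      using fst_TXset[of X DX] by (auto simp: dsmooth_def Dpp_def Dall_def pull_def)
    show "fibre_vs (TX_with X DX Dpp)" by (rule fibre_vs_TX)
    fix n U
    show "vs_totD (TX_with X DX Dpp) n U (\<lambda>u. vs_add (TX_with X DX Dpp) (a u) (b u))"
      if ab: "vs_totD (TX_with X DX Dpp) n U a \<and> vs_totD (TX_with X DX Dpp) n U b \<and>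
        (\<forall>u\<in>U. vs_prj (TX_with X DX Dpp) (a u) = vs_prj (TX_with X DX Dpp) (b u))" for a b
    proof -
      have a: "Dpp n U a" and b: "Dpp n U b" and e: "\<forall>u\<in>U. fst (a u) = fst (b u)" using ab by simp_all
      have Dab: "Dall X DX n U (\<lambda>u. tx_add DX (a u) (b u))"
        using DA a b e by (simp add: Dpp_def)
      have aT: "a u \<in> TXset X DX" "b u \<in> TXset X DX" if "u \<in> U" for u
        using a b that by (auto simp: Dpp_def pull_def)
      have "vs_totD W n U (\<lambda>u. vs_add W ((gg \<circ> a) u) ((gg \<circ> b) u))"
      proof -
        have "vs_totD W n U (gg \<circ> a)" "vs_totD W n U (gg \<circ> b)" using a b by (simp_all add: Dpp_def pull_def)
        moreover have "\<forall>u\<in>U. vs_prj W ((gg \<circ> a) u) = vs_prj W ((gg \<circ> b) u)"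
          using gg_mem aT e by (auto simp: fib_def)
        ultimately show ?thesis using WW by blast
      qed
      moreover have "\<forall>u\<in>U. vs_add W ((gg \<circ> a) u) ((gg \<circ> b) u) = (gg \<circ> (\<lambda>u. tx_add DX (a u) (b u))) u"
      proof
        fix u assume u: "u \<in> U"
        have x: "fst (a u) \<in> X" using aT[OF u] TXset_iff by blast
        have "a u \<in> fib (TX_with X DX Dpp) (fst (a u))" "b u \<in> fib (TX_with X DX Dpp) (fst (a u))"
          using aT[OF u] e u by (auto simp: fib_def)
        then show "vs_add W ((gg \<circ> a) u) ((gg \<circ> b) u) = (gg \<circ> (\<lambda>u. tx_add DX (a u) (b u))) u"
          using gg_lin(1)[OF x] by simp
      qed
      ultimately have "vs_totD W n U (gg \<circ> (\<lambda>u. tx_add DX (a u) (b u)))"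
        by (rule diffeologyD(5)[OF Wdiff(1)])
      then show ?thesis using Dab by (simp add: Dpp_def pull_def Dall_def)
    qed
    show "vs_totD (TX_with X DX Dpp) n U (\<lambda>u. vs_smul (TX_with X DX Dpp) (r u) (a u))"
      if ra: "open_Rn n U \<and> smooth_real n U r \<and> vs_totD (TX_with X DX Dpp) n U a" for r a
    proof -
      have o: "open_Rn n U" "smooth_real n U r" and a: "Dpp n U a" using ra by simp_all
      have Dab: "Dall X DX n U (\<lambda>u. tx_smul DX (r u) (a u))"
        using DA a o by (simp add: Dpp_def)
      have aT: "a u \<in> TXset X DX" if "u \<in> U" for u
        using a that by (auto simp: Dpp_def pull_def)
      have "vs_totD W n U (\<lambda>u. vs_smul W (r u) ((gg \<circ> a) u))"
      proof -
        have "vs_totD W n U (gg \<circ> a)" using a by (simp_all add: Dpp_def pull_def)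
        then show ?thesis using WW o by blast
      qed
      moreover have "\<forall>u\<in>U. vs_smul W (r u) ((gg \<circ> a) u) = (gg \<circ> (\<lambda>u. tx_smul DX (r u) (a u))) u"
      proof
        fix u assume u: "u \<in> U"
        have x: "fst (a u) \<in> X" using aT[OF u] TXset_iff by blast
        have "a u \<in> fib (TX_with X DX Dpp) (fst (a u))"
          using aT[OF u] u by (auto simp: fib_def)
        then show "vs_smul W (r u) ((gg \<circ> a) u) = (gg \<circ> (\<lambda>u. tx_smul DX (r u) (a u))) u"
          using gg_lin(2)[OF x] by simp
      qed
      ultimately have "vs_totD W n U (gg \<circ> (\<lambda>u. tx_smul DX (r u) (a u)))"
        by (rule diffeologyD(5)[OF Wdiff(1)])
      then show ?thesis using Dab by (simp add: Dpp_def pull_def Dall_def)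
    qed
    show "vs_totD (TX_with X DX Dpp) n U (\<lambda>u. vs_zero (TX_with X DX Dpp) (q u))"
      if qq: "vs_basD (TX_with X DX Dpp) n U q" for q
    proof -
      have q: "DX n U q" using qq by simp
      have qX: "\<forall>u\<in>U. q u \<in> X" using diffeologyD(1)[OF X q] by blast
      have Dab: "Dall X DX n U (\<lambda>u. tx_zero DX (q u))"
        using DA q by simp
      have "vs_basD W n U (hh \<circ> q)" using hh_smooth q by (simp add: dsmooth_def)
      then have "vs_totD W n U (\<lambda>u. vs_zero W ((hh \<circ> q) u))" using WW by blast
      moreover have "\<forall>u\<in>U. vs_zero W ((hh \<circ> q) u) = (gg \<circ> (\<lambda>u. tx_zero DX (q u))) u"
        using gg_zero qX by simp
      ultimately have "vs_totD W n U (gg \<circ> (\<lambda>u. tx_zero DX (q u)))"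
        by (rule diffeologyD(5)[OF Wdiff(1)])
      then show ?thesis using Dab by (simp add: Dpp_def pull_def Dall_def)
    qed
  qed
qed

lemma dvs_dfg_Dpp: "is_dvs W \<Longrightarrow> dvs_dfg X DX k V q \<Longrightarrow> Dpp k V q"
  by (rule dvs_le[OF _ _ dvs_Dpp]) (auto intro: hector_Dpp)

lemma uniq:
  assumes M: "mediator DX (TX_with X DX D) W G H g' h'"
  shows "(\<forall>v\<in>TXset X DX. g' v = gg v) \<and> (\<forall>x\<in>X. h' x = hh x)"
proof (intro conjI ballI)
  have vh: "vsd_hom (TX_with X DX D) W g' h'" using M by (simp add: mediator_def)
  have gT: "\<And>j z. j \<in> plots DX \<Longrightarrow> z \<in> vs_tot (TUobj j) \<Longrightarrow> g' (Tleg DX j z) = G j z"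
    using M by (simp add: mediator_def)
  have hP: "\<And>j u. j \<in> plots DX \<Longrightarrow> u \<in> fst (snd j) \<Longrightarrow> h' (Pleg j u) = H j u"
    using M by (simp add: mediator_def)
  have glin: "\<And>x v w. x \<in> X \<Longrightarrow> v \<in> fib (TX_with X DX D) x \<Longrightarrow> w \<in> fib (TX_with X DX D) x \<Longrightarrow>
      g' (tx_add DX v w) = vs_add W (g' v) (g' w)"
    using vh unfolding vsd_hom_def by simp
  fix x assume x: "x \<in> X"
  show "h' x = hh x" using hP[OF cst_plot[OF x], of zv] by (simp add: cst_def Pleg_def hh_def)
next
  have vh: "vsd_hom (TX_with X DX D) W g' h'" using M by (simp add: mediator_def)
  have gT: "\<And>j z. j \<in> plots DX \<Longrightarrow> z \<in> vs_tot (TUobj j) \<Longrightarrow> g' (Tleg DX j z) = G j z"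
    using M by (simp add: mediator_def)
  have glin: "\<And>x v w. x \<in> X \<Longrightarrow> v \<in> fib (TX_with X DX D) x \<Longrightarrow> w \<in> fib (TX_with X DX D) x \<Longrightarrow>
      g' (tx_add DX v w) = vs_add W (g' v) (g' w)"
    using vh unfolding vsd_hom_def by simp
  have Tj: "Tleg DX j (zv, v) = (x, cls DX x (Defs.inj j v))" if "j \<in> Jx DX x" for j x v
  proof -
    obtain n U p where jj: "j = (n, U, p)" by (cases j)
    then show ?thesis using Jpl_zero[of n U p DX x] that by (simp add: Tleg_eq Jx_def)
  qed
  have main: "\<forall>s. s \<in> FS DX x \<and> {j. s j \<noteq> zv} = A \<longrightarrow> g' (x, cls DX x s) = L x s"
    if x: "x \<in> X" and A: "finite A" for x A
    using A
  proof (induction A rule: finite_induct)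
    case empty
    show ?case
    proof (intro allI impI)
      fix s assume s: "s \<in> FS DX x \<and> {j. s j \<noteq> zv} = {}"
      then have s0: "s = (\<lambda>k i. 0)" by (auto simp: fun_eq_iff zv_def)
      have "Defs.inj (cst x) zv = (\<lambda>k i. 0)" by (auto simp: fun_eq_iff inj_apply)
      then have "(x, cls DX x s) = Tleg DX (cst x) (zv, zv)" using Tj[OF cst_Jx[OF x]] s0 by simp
      moreover have "(zv, zv) \<in> vs_tot (TUobj (cst x))" by (simp add: cst_def zv_Rn)
      ultimately have "g' (x, cls DX x s) = G (cst x) (zv, zv)" using gT cst_plot[OF x] by simp
      also have "\<dots> = vs_zero W (hh x)" by (rule Gzero[OF cst_Jx[OF x] x])
      also have "\<dots> = L x s" using L_0[OF x] s0 by simp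
      finally show "g' (x, cls DX x s) = L x s" .
    qed
  next
    case (insert j A)
    show ?case
    proof (intro allI impI)
      fix s assume s: "s \<in> FS DX x \<and> {j. s j \<noteq> zv} = insert j A"
      define s' where "s' = s(j := zv)"
      have sF: "s \<in> FS DX x" using s by blast
      have sj: "s j \<noteq> zv" using s by auto
      have jJ: "j \<in> Jx DX x" using FS_supp[OF sF sj] .
      have vj: "s j \<in> Rn (fst j)" using FS_val[OF sF] .
      have supp': "{k. s' k \<noteq> zv} = A" using s insert(2) by (auto simp: s'_def)
      have s'FS: "s' \<in> FS DX x"
      proof (rule FSI)
        show "finite {k. s' k \<noteq> zv}" using supp' insert(1) by simp
        show "s' k \<noteq> zv \<Longrightarrow> k \<in> Jx DX x" for k using FS_supp[OF sF, of k] by (auto simp: s'_def split: if_splits)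
        show "s' k \<in> Rn (fst k)" for k using FS_val[OF sF, of k] zv_Rn by (auto simp: s'_def)
      qed
      have iFS: "Defs.inj j (s j) \<in> FS DX x" by (rule FS_inj[OF jJ vj])
      have dec: "s = sadd s' (Defs.inj j (s j))"
        by (auto simp: fun_eq_iff sadd_def s'_def inj_apply)
      have "(x, cls DX x s) = tx_add DX (x, cls DX x s') (x, cls DX x (Defs.inj j (s j)))"
        using tx_add_cls[OF s'FS iFS] dec by simp
      moreover have "(x, cls DX x s') \<in> fib (TX_with X DX D) x" "(x, cls DX x (Defs.inj j (s j))) \<in> fib (TX_with X DX D) x"
        using fib_TX[OF x] s'FS iFS by auto
      ultimately have "g' (x, cls DX x s) = vs_add W (g' (x, cls DX x s')) (g' (x, cls DX x (Defs.inj j (s j))))"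
        using glin[OF x] by simp
      also have "g' (x, cls DX x s') = L x s'" using insert(3) s'FS supp' by blast
      also have "g' (x, cls DX x (Defs.inj j (s j))) = G j (zv, s j)"
      proof -
        obtain n U p where jj: "j = (n, U, p)" by (cases j)
        have "(zv, s j) \<in> vs_tot (TUobj j)" using jJ vj jj by (simp add: Jx_def)
        then show ?thesis using gT[OF Jx_plots[OF jJ]] Tj[OF jJ] by metis
      qed
      also have "vs_add W (L x s') (G j (zv, s j)) = L x s"
        using L_add[OF x s'FS iFS] L_inj[OF x jJ vj] dec by simp
      finally show "g' (x, cls DX x s) = L x s" .
    qed
  qed
  fix v assume v: "v \<in> TXset X DX"
  then obtain s where x: "fst v \<in> X" and s: "s \<in> FS DX (fst v)" and e: "v = (fst v, cls DX (fst v) s)"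
    using TXset_iff by (metis prod.collapse)
  have "g' v = L (fst v) s" using main[OF x FS_fin[OF s]] s e by metis
  also have "\<dots> = gg v" using gg_cls[OF x s] e by simp
  finally show "g' v = gg v" .
qed

lemma unique:
  assumes D: "\<And>k V q. D k V q \<Longrightarrow> Dpp k V q"
  shows "unique_mediator DX (TX_with X DX D) W G H"
  unfolding unique_mediator_def
proof (rule conjI)
  show "\<exists>g h. mediator DX (TX_with X DX D) W G H g h" using mediator_gg D by blast
next
  show "\<forall>g h g' h'. mediator DX (TX_with X DX D) W G H g h \<and> mediator DX (TX_with X DX D) W G H g' h' \<longrightarrow>
        (\<forall>v\<in>vs_tot (TX_with X DX D). g v = g' v) \<and> (\<forall>x\<in>vs_bas (TX_with X DX D). h x = h' x)"
  proof (intro allI impI)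
  fix g h g' h' assume m: "mediator DX (TX_with X DX D) W G H g h \<and> mediator DX (TX_with X DX D) W G H g' h'"
  have u1: "(\<forall>v\<in>TXset X DX. g v = gg v) \<and> (\<forall>x\<in>X. h x = hh x)" using uniq m by blast
  have u2: "(\<forall>v\<in>TXset X DX. g' v = gg v) \<and> (\<forall>x\<in>X. h' x = hh x)" using uniq m by blast
  show "(\<forall>v\<in>vs_tot (TX_with X DX D). g v = g' v) \<and> (\<forall>x\<in>vs_bas (TX_with X DX D). h x = h' x)"
    using u1 u2 by simp
  qed
qed

end



theorem theorem4p17:
  fixes X :: "'a set" and DX :: "'a dfg"
  assumes "diffeology X DX"
  shows "(is_dvs (TXdvs X DX) \<and> cocone DX (TXdvs X DX) (Tleg DX) Pleg \<and>
          (\<forall>(W :: ('w, 'y) vsd) G H. is_dvs W \<and> cocone DX W G H \<longrightarrow>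
              unique_mediator DX (TXdvs X DX) W G H))
       \<and> (is_vsd (TXH X DX) \<and> cocone DX (TXH X DX) (Tleg DX) Pleg \<and>
          (\<forall>(W :: ('w, 'y) vsd) G H. is_vsd W \<and> cocone DX W G H \<longrightarrow>
              unique_mediator DX (TXH X DX) W G H))"
proof (intro conjI allI impI)
  note X = assms
  show "is_dvs (TXdvs X DX)" by (rule is_dvs_TXdvs[OF X])
  show "cocone DX (TXdvs X DX) (Tleg DX) Pleg"
    unfolding TXdvs_def by (rule cocone_TX[OF X]) (rule hector_dvs, rule hector_gen)
  show "is_vsd (TXH X DX)" by (rule is_vsd_TXH[OF X])
  show "cocone DX (TXH X DX) (Tleg DX) Pleg"
    unfolding TXH_def by (rule cocone_TX[OF X]) (rule hector_gen)
next
  fix W :: "('w, 'y) vsd" and G H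
  assume a: "is_dvs W \<and> cocone DX W G H"
  interpret med X DX W G H
    by unfold_locales (use assms a in \<open>auto simp: is_dvs_def\<close>)
  show "unique_mediator DX (TXdvs X DX) W G H"
    unfolding TXdvs_def by (rule unique) (rule dvs_dfg_Dpp, use a in auto)
next
  fix W :: "('w, 'y) vsd" and G H
  assume a: "is_vsd W \<and> cocone DX W G H"
  interpret med X DX W G H
    by unfold_locales (use assms a in auto)
  show "unique_mediator DX (TXH X DX) W G H"
    unfolding TXH_def by (rule unique) (rule hector_Dpp)
qed


end
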